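(* Let $G$ be the non-abelian group of order $27$ and exponent $3$. Every sequence of length $33$ over $G$ contains a product-one subsequence of length $27$. Consequently $\mathsf{E}(G)=33$, and in particular $\mathsf{E}(G)=\mathsf{d}(G)+|G|$.
   Context: A sequence over $G$ is a finite unordered list (multiset) of elements of $G$; a subsequence is a sub-multiset; a non-empty sequence is product-one if some ordering of its terms has product $1$. The Gao constant $\mathsf{E}(G)$ is the least integer $N$ such that every sequence over $G$ of length at least $N$ has a product-one subsequence of length $|G|$. The small Davenport constant $\mathsf{d}(G)$ is the maximal length of a sequence over $G$ with no non-empty product-one subsequence. *)

theory Defs
  imports "HOL-Algebra.Coset" "HOL-Library.Multiset"
begin

definition seq_over :: "('a, 'b) monoid_scheme \<Rightarrow> 'a multiset \<Rightarrow> bool" where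
  "seq_over G M \<longleftrightarrow> set_mset M \<subseteq> carrier G"

definition product_one :: "('a, 'b) monoid_scheme \<Rightarrow> 'a multiset \<Rightarrow> bool" where
  "product_one G M \<longleftrightarrow> M \<noteq> {#} \<and>
     (\<exists>xs. mset xs = M \<and> foldr (\<lambda>x y. x \<otimes>\<^bsub>G\<^esub> y) xs \<one>\<^bsub>G\<^esub> = \<one>\<^bsub>G\<^esub>)"

definition gao_constant :: "('a, 'b) monoid_scheme \<Rightarrow> nat" where
  "gao_constant G = (LEAST N. \<forall>M. seq_over G M \<and> size M \<ge> N \<longrightarrow>
       (\<exists>S. S \<subseteq># M \<and> size S = order G \<and> product_one G S))"

definition small_davenport :: "('a, 'b) monoid_scheme \<Rightarrow> nat" where
  "small_davenport G = Max {size M | M. seq_over G M \<and>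
       \<not> (\<exists>S. S \<subseteq># M \<and> product_one G S)}"

end

theory Submission
  imports Defs "HOL-Library.Numeral_Type"
begin

definition pdeg :: "nat \<Rightarrow> ('a set \<Rightarrow> 'r::comm_ring_1) \<Rightarrow> 'a set \<Rightarrow> bool" where
  "pdeg m g N \<longleftrightarrow> (\<exists>c. (\<forall>U. m < card U \<longrightarrow> c U = 0) \<and> (\<forall>I. I \<subseteq> N \<longrightarrow> g I = (\<Sum>U\<in>Pow I. c U)))"

lemma pdeg_const:
  assumes "finite N" shows "pdeg 0 (\<lambda>I. k) N"
  unfolding pdeg_def
proof (intro exI[of _ "\<lambda>U. if U = {} then k else 0"] conjI allI impI)
  fix U :: "'a set" assume "0 < card U" then show "(if U = {} then k else 0) = 0" by auto
next
  fix I assume "I \<subseteq> N"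
  then have "finite I" using assms finite_subset by blast
  then show "k = (\<Sum>U\<in>Pow I. if U = {} then k else 0)"
    by (simp add: sum.delta)
qed

lemma pdeg_lin:
  assumes "finite N" shows "pdeg 1 (\<lambda>I. \<Sum>i\<in>I. w i) N"
  unfolding pdeg_def
proof (intro exI[of _ "\<lambda>U. if card U = 1 then w (the_elem U) else 0"] conjI allI impI)
  fix U :: "'a set" assume "1 < card U" then show "(if card U = 1 then w (the_elem U) else 0) = 0" by auto
next
  fix I assume "I \<subseteq> N"
  then have fI: "finite I" using assms finite_subset by blast
  have "(\<Sum>U\<in>Pow I. if card U = 1 then w (the_elem U) else 0)
      = (\<Sum>U\<in>(\<lambda>i. {i}) ` I. if card U = 1 then w (the_elem U) else 0)"
  proof (rule sum.mono_neutral_right)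
    show "finite (Pow I)" using fI by simp
    show "(\<lambda>i. {i}) ` I \<subseteq> Pow I" by auto
    show "\<forall>U\<in>Pow I - (\<lambda>i. {i}) ` I. (if card U = 1 then w (the_elem U) else 0) = 0"
    proof
      fix U assume U: "U \<in> Pow I - (\<lambda>i. {i}) ` I"
      show "(if card U = 1 then w (the_elem U) else 0) = 0"
      proof (cases "card U = 1")
        case True
        then obtain a where "U = {a}" by (auto simp: card_1_singleton_iff)
        with U show ?thesis by auto
      qed simp
    qed
  qed
  also have "\<dots> = (\<Sum>i\<in>I. w i)"
    by (subst sum.reindex) (auto simp: inj_on_def)
  finally show "(\<Sum>i\<in>I. w i) = (\<Sum>U\<in>Pow I. if card U = 1 then w (the_elem U) else 0)" by simp
qed

lemma pdeg_add:
  assumes "pdeg m g N" "pdeg m h N" shows "pdeg m (\<lambda>I. g I + h I) N"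
proof -
  obtain c where c: "\<forall>U. m < card U \<longrightarrow> c U = 0" "\<forall>I. I \<subseteq> N \<longrightarrow> g I = (\<Sum>U\<in>Pow I. c U)"
    using assms(1) unfolding pdeg_def by blast
  obtain d where d: "\<forall>U. m < card U \<longrightarrow> d U = 0" "\<forall>I. I \<subseteq> N \<longrightarrow> h I = (\<Sum>U\<in>Pow I. d U)"
    using assms(2) unfolding pdeg_def by blast
  show ?thesis unfolding pdeg_def
    by (rule exI[of _ "\<lambda>U. c U + d U"]) (simp add: c d sum.distrib)
qed

lemma pdeg_mono:
  assumes "pdeg m g N" "m \<le> m'" shows "pdeg m' g N"
  using assms unfolding pdeg_def by (meson le_less_trans)

lemma pdeg_mult:
  assumes fin: "finite N" and "pdeg m g N" "pdeg m' h N" shows "pdeg (m + m') (\<lambda>I. g I * h I) N"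
proof -
  obtain c where c: "\<forall>U. m < card U \<longrightarrow> c U = 0" "\<forall>I. I \<subseteq> N \<longrightarrow> g I = (\<Sum>U\<in>Pow I. c U)"
    using assms(2) unfolding pdeg_def by blast
  obtain d where d: "\<forall>U. m' < card U \<longrightarrow> d U = 0" "\<forall>I. I \<subseteq> N \<longrightarrow> h I = (\<Sum>U\<in>Pow I. d U)"
    using assms(3) unfolding pdeg_def by blast
  define e where "e W = (\<Sum>p\<in>{p \<in> Pow W \<times> Pow W. fst p \<union> snd p = W}. c (fst p) * d (snd p))" for W
  show ?thesis unfolding pdeg_def
  proof (intro exI[of _ e] conjI allI impI)
    fix W :: "'a set" assume W: "m + m' < card W"
    show "e W = 0" unfolding e_def
    proof (rule sum.neutral, rule ballI)
      fix p assume p: "p \<in> {p \<in> Pow W \<times> Pow W. fst p \<union> snd p = W}"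
      then have "card W \<le> card (fst p) + card (snd p)" using card_Un_le by (metis (mono_tags, lifting) mem_Collect_eq)
      with W have "m < card (fst p) \<or> m' < card (snd p)" by linarith
      then show "c (fst p) * d (snd p) = 0" using c(1) d(1) by auto
    qed
  next
    fix I assume I: "I \<subseteq> N"
    then have fI: "finite I" using fin finite_subset by blast
    have "g I * h I = (\<Sum>U\<in>Pow I. c U) * (\<Sum>U\<in>Pow I. d U)" using c d I by simp
    also have "\<dots> = (\<Sum>p\<in>Pow I \<times> Pow I. c (fst p) * d (snd p))"
      by (simp add: sum_product sum.cartesian_product split_def)
    also have "\<dots> = (\<Sum>W\<in>Pow I. \<Sum>p\<in>{p \<in> Pow I \<times> Pow I. fst p \<union> snd p = W}. c (fst p) * d (snd p))"
      by (rule sum.group[symmetric]) (use fI in auto)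
    also have "\<dots> = (\<Sum>W\<in>Pow I. e W)"
    proof (rule sum.cong[OF refl])
      fix W assume "W \<in> Pow I"
      then have "{p \<in> Pow I \<times> Pow I. fst p \<union> snd p = W} = {p \<in> Pow W \<times> Pow W. fst p \<union> snd p = W}"
        by auto
      then show "(\<Sum>p\<in>{p \<in> Pow I \<times> Pow I. fst p \<union> snd p = W}. c (fst p) * d (snd p)) = e W"
        unfolding e_def by simp
    qed
    finally show "g I * h I = (\<Sum>W\<in>Pow I. e W)" .
  qed
qed

lemma alt_super_zero:
  assumes "finite S" "U \<subset> S"
  shows "(\<Sum>T | T \<subseteq> S \<and> U \<subseteq> T. (-1) ^ card T) = (0::'r::comm_ring_1)"
  by (rule sum_alternating_cancels)
     (use assms in \<open>auto simp: card_subsupersets_even_odd cong: conj_cong\<close>)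

lemma pdeg_vanish:
  assumes fin: "finite N" and "pdeg m g N" and "m < card N"
  shows "(\<Sum>I\<in>Pow N. (-1) ^ card I * g I) = 0"
proof -
  obtain c where c: "\<forall>U. m < card U \<longrightarrow> c U = 0" "\<forall>I. I \<subseteq> N \<longrightarrow> g I = (\<Sum>U\<in>Pow I. c U)"
    using assms(2) unfolding pdeg_def by blast
  have "(\<Sum>I\<in>Pow N. (-1) ^ card I * g I) = (\<Sum>I\<in>Pow N. \<Sum>U\<in>{U \<in> Pow N. U \<subseteq> I}. (-1) ^ card I * c U)"
  proof (rule sum.cong[OF refl])
    fix I assume "I \<in> Pow N"
    then have "{U \<in> Pow N. U \<subseteq> I} = Pow I" by auto
    then show "(-1) ^ card I * g I = (\<Sum>U\<in>{U \<in> Pow N. U \<subseteq> I}. (-1) ^ card I * c U)"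
      using c(2) \<open>I \<in> Pow N\<close> by (simp add: sum_distrib_left)
  qed
  also have "\<dots> = (\<Sum>U\<in>Pow N. \<Sum>I\<in>{I \<in> Pow N. U \<subseteq> I}. (-1) ^ card I * c U)"
    by (rule sum.swap_restrict) (use fin in auto)
  also have "\<dots> = (\<Sum>U\<in>Pow N. 0)"
  proof (rule sum.cong[OF refl])
    fix U assume U: "U \<in> Pow N"
    show "(\<Sum>I\<in>{I \<in> Pow N. U \<subseteq> I}. (-1) ^ card I * c U) = 0"
    proof (cases "m < card U")
      case True then show ?thesis using c(1) by simp
    next
      case False
      then have "U \<subset> N" using U assms(3) by auto
      have "(\<Sum>I\<in>{I \<in> Pow N. U \<subseteq> I}. (-1) ^ card I * c U) = (\<Sum>I | I \<subseteq> N \<and> U \<subseteq> I. (-1) ^ card I) * c U"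
        by (simp add: sum_distrib_right)
      also have "\<dots> = 0" by (simp add: alt_super_zero[OF fin \<open>U \<subset> N\<close>])
      finally show ?thesis .
    qed
  qed
  finally show ?thesis by simp
qed

lemma cw_exists:
  fixes g :: "'a set \<Rightarrow> 3"
  assumes fin: "finite N" and "pdeg m g N" and "m < card N" and "g {} = 1"
    and "\<And>I. I \<subseteq> N \<Longrightarrow> g I = 0 \<or> g I = 1"
  shows "\<exists>I. I \<subseteq> N \<and> I \<noteq> {} \<and> g I = 1"
proof (rule ccontr)
  assume "\<not> ?thesis"
  then have z: "\<And>I. I \<subseteq> N \<Longrightarrow> I \<noteq> {} \<Longrightarrow> g I = 0" using assms(5) by blast
  have "(\<Sum>I\<in>Pow N. (-1) ^ card I * g I) = (-1) ^ card {} * g {} + (\<Sum>I\<in>Pow N - {{}}. (-1) ^ card I * g I)"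
    using sum.remove[of "Pow N" "{}" "\<lambda>I. (-1) ^ card I * g I"] fin by simp
  also have "(\<Sum>I\<in>Pow N - {{}}. (-1) ^ card I * g I) = 0"
    by (rule sum.neutral) (use z in auto)
  finally have "(\<Sum>I\<in>Pow N. (-1) ^ card I * g I) = 1" using assms(4) by simp
  with pdeg_vanish[OF assms(1-3)] show False by simp
qed

lemma F3_cases: "(x::3) = 0 \<or> x = 1 \<or> x = 2"
proof (induct x)
  case (of_int z)
  then have "z = 0 \<or> z = 1 \<or> z = 2" by auto
  then show ?case by auto
qed

lemma F3_sq_ind: "1 - (x::3)^2 = (if x = 0 then 1 else 0)"
  using F3_cases[of x] by (auto simp: power2_eq_square)

lemma pdeg_sq:
  assumes "finite N" shows "pdeg 2 (\<lambda>I. 1 - (\<Sum>i\<in>I. w i)^2 :: 3) N"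
proof -
  have a: "pdeg 0 (\<lambda>I. 1::3) N" by (rule pdeg_const[OF assms])
  have b: "pdeg 0 (\<lambda>I. -1::3) N" by (rule pdeg_const[OF assms])
  have l: "pdeg 1 (\<lambda>I. (\<Sum>i\<in>I. w i)::3) N" by (rule pdeg_lin[OF assms])
  have "pdeg (0 + (1 + 1)) (\<lambda>I. (-1::3) * ((\<Sum>i\<in>I. w i) * (\<Sum>i\<in>I. w i))) N"
    by (rule pdeg_mult[OF assms b pdeg_mult[OF assms l l]])
  then have c: "pdeg 2 (\<lambda>I. (-1::3) * ((\<Sum>i\<in>I. w i) * (\<Sum>i\<in>I. w i))) N" by (simp add: numeral_2_eq_2)
  have "pdeg 2 (\<lambda>I. (1::3) + (-1::3) * ((\<Sum>i\<in>I. w i) * (\<Sum>i\<in>I. w i))) N"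
    by (rule pdeg_add[OF pdeg_mono[OF a] c]) simp
  then show ?thesis by (simp add: power2_eq_square)
qed

lemma alt_partial:
  "(\<Sum>k\<le>m. (-1)^k * of_nat (Suc n choose k)) = (-1)^m * (of_nat (n choose m) :: 'r::comm_ring_1)"
proof (induct m)
  case 0 then show ?case by simp
next
  case (Suc m)
  have "(\<Sum>k\<le>Suc m. (-1)^k * of_nat (Suc n choose k)) =
        (-1)^m * of_nat (n choose m) + (-1)^Suc m * (of_nat (n choose m) + of_nat (n choose Suc m) :: 'r)"
    using Suc by (simp add: binomial_Suc_Suc)
  also have "\<dots> = (-1)^Suc m * of_nat (n choose Suc m)" by (simp add: algebra_simps)
  finally show ?case .
qed

definition fw :: "nat set \<Rightarrow> 3" where
  "fw I = (\<Sum>U\<in>Pow I. if card U \<le> 26 then (-1)^card U else 0)"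

lemma pdeg_fw: "finite N \<Longrightarrow> pdeg 26 fw N"
  unfolding pdeg_def fw_def
  by (rule exI[of _ "\<lambda>U. if card U \<le> 26 then (-1)^card U else 0"]) auto

lemma sum_Pow_card:
  assumes "finite I"
  shows "(\<Sum>U\<in>Pow I. h (card U)) = (\<Sum>k\<le>card I. of_nat (card I choose k) * (h k :: 'r::comm_ring_1))"
proof -
  have "(\<Sum>U\<in>Pow I. h (card U)) = (\<Sum>k\<in>{..card I}. \<Sum>U\<in>{U \<in> Pow I. card U = k}. h (card U))"
    by (rule sum.group[symmetric]) (use assms in \<open>auto intro: card_mono\<close>)
  also have "\<dots> = (\<Sum>k\<le>card I. of_nat (card I choose k) * h k)"
  proof (rule sum.cong[OF refl])
    fix k
    have "{U \<in> Pow I. card U = k} = {B. B \<subseteq> I \<and> card B = k}" by auto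
    then have "card {U \<in> Pow I. card U = k} = card I choose k" using n_subsets[OF assms] by simp
    then show "(\<Sum>U\<in>{U \<in> Pow I. card U = k}. h (card U)) = of_nat (card I choose k) * h k"
      by simp
  qed
  finally show ?thesis .
qed

lemma fw_val:
  assumes "finite I" "card I \<le> 33"
  shows "fw I = (if card I = 0 \<or> card I = 27 then 1 else 0)"
proof -
  define t where "t = card I"
  have "fw I = (\<Sum>k\<le>t. of_nat (t choose k) * (if k \<le> 26 then (-1)^k else 0))"
    unfolding fw_def t_def using sum_Pow_card[OF assms(1), of "\<lambda>k. if k \<le> 26 then (-1)^k else 0"]
    by simp
  show ?thesis
  proof (cases t)
    case 0
    then show ?thesis using \<open>fw I = _\<close> t_def by simp
  next
    case (Suc n)
    have "(\<Sum>k\<le>t. of_nat (t choose k) * (if k \<le> 26 then (-1)^k else 0)) = (\<Sum>k\<le>max t 26. of_nat (t choose k) * (if k \<le> 26 then (-1)^k else 0) :: 3)"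
      by (rule sum.mono_neutral_left) (auto simp: binomial_eq_0)
    also have "\<dots> = (\<Sum>k\<le>26. of_nat (t choose k) * (if k \<le> 26 then (-1)^k else 0))"
      by (rule sum.mono_neutral_right) auto
    also have "\<dots> = (\<Sum>k\<le>26. (-1)^k * of_nat (Suc n choose k))"
      by (rule sum.cong) (auto simp: Suc)
    also have "\<dots> = of_nat (n choose 26)" by (simp add: alt_partial)
    finally have e: "fw I = of_nat (n choose 26)" using \<open>fw I = _\<close> by simp
    have "n \<le> 32" using assms(2) Suc t_def by simp
    then have "n < 26 \<or> n = 26 \<or> n = 27 \<or> n = 28 \<or> n = 29 \<or> n = 30 \<or> n = 31 \<or> n = 32" by linarith
    then show ?thesis using e Suc t_def
      by (elim disjE) (simp_all add: binomial_fact' fact_numeral binomial_eq_0)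
  qed
qed

lemma cw_E:
  fixes w1 w2 w3 :: "nat \<Rightarrow> 3"
  shows "\<exists>I \<subseteq> {..<33}. card I = 27 \<and> (\<Sum>i\<in>I. w1 i) = 0 \<and> (\<Sum>i\<in>I. w2 i) = 0 \<and> (\<Sum>i\<in>I. w3 i) = 0"
proof -
  define N where "N = {..<33::nat}"
  have fN: "finite N" by (simp add: N_def)
  define g where "g I = (1 - (\<Sum>i\<in>I. w1 i)^2) * (1 - (\<Sum>i\<in>I. w2 i)^2) * (1 - (\<Sum>i\<in>I. w3 i)^2) * fw I" for I
  have "pdeg (((2 + 2) + 2) + 26) g N"
    unfolding g_def
    by (intro pdeg_mult fN pdeg_sq pdeg_fw)
  then have pd: "pdeg 32 g N" by simp
  have g0: "g {} = 1" by (simp add: g_def fw_def)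
  have gv: "g I = (if (\<Sum>i\<in>I. w1 i) = 0 \<and> (\<Sum>i\<in>I. w2 i) = 0 \<and> (\<Sum>i\<in>I. w3 i) = 0 \<and> (card I = 0 \<or> card I = 27) then 1 else 0)"
    if "I \<subseteq> N" for I
  proof -
    have "finite I" "card I \<le> 33" using that fN finite_subset card_mono[OF fN that] by (auto simp: N_def)
    then show ?thesis unfolding g_def F3_sq_ind by (simp add: fw_val)
  qed
  have "\<exists>I. I \<subseteq> N \<and> I \<noteq> {} \<and> g I = 1"
    by (rule cw_exists[OF fN pd _ g0]) (auto simp: N_def gv)
  then obtain I where I: "I \<subseteq> N" "I \<noteq> {}" "g I = 1" by blast
  then have "finite I" using fN finite_subset by blast
  with I gv[OF I(1)] show ?thesis unfolding N_def by (auto split: if_splits)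
qed

lemma cw_D:
  fixes w1 w2 :: "nat \<Rightarrow> 3"
  shows "\<exists>I \<subseteq> {..<5}. I \<noteq> {} \<and> (\<Sum>i\<in>I. w1 i) = 0 \<and> (\<Sum>i\<in>I. w2 i) = 0"
proof -
  define N where "N = {..<5::nat}"
  have fN: "finite N" by (simp add: N_def)
  define g where "g I = (1 - (\<Sum>i\<in>I. w1 i)^2) * (1 - (\<Sum>i\<in>I. w2 i)^2)" for I
  have "pdeg (2 + 2) g N"
    unfolding g_def by (intro pdeg_mult fN pdeg_sq)
  then have pd: "pdeg 4 g N" by simp
  have g0: "g {} = 1" by (simp add: g_def)
  have gv: "g I = (if (\<Sum>i\<in>I. w1 i) = 0 \<and> (\<Sum>i\<in>I. w2 i) = 0 then 1 else 0)" for I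
    unfolding g_def F3_sq_ind by simp
  have "\<exists>I. I \<subseteq> N \<and> I \<noteq> {} \<and> g I = 1"
    by (rule cw_exists[OF fN pd _ g0]) (auto simp: N_def gv)
  then show ?thesis unfolding N_def by (auto simp: gv split: if_splits)
qed

type_synonym h = "3 \<times> 3 \<times> 3"

abbreviation pb :: "h \<Rightarrow> 3" where "pb x \<equiv> fst (snd x)"
abbreviation pc :: "h \<Rightarrow> 3" where "pc x \<equiv> snd (snd x)"

definition hmul :: "h \<Rightarrow> h \<Rightarrow> h" where
  "hmul x y = (fst x + fst y, pb x + pb y, pc x + pc y + pb x * fst y)"

definition hprod :: "h list \<Rightarrow> h" where "hprod xs = foldr hmul xs (0,0,0)"

definition om :: "h \<Rightarrow> h \<Rightarrow> 3" where "om x y = pb x * fst y - pb y * fst x"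

definition psi :: "h \<Rightarrow> 3" where "psi x = pc x + fst x * pb x"

definition central :: "h \<Rightarrow> bool" where "central x \<longleftrightarrow> fst x = 0 \<and> pb x = 0"

definition sa :: "h multiset \<Rightarrow> 3" where "sa S = sum_mset (image_mset fst S)"
definition sb :: "h multiset \<Rightarrow> 3" where "sb S = sum_mset (image_mset pb S)"
definition spsi :: "h multiset \<Rightarrow> 3" where "spsi S = sum_mset (image_mset psi S)"

definition POH :: "h multiset \<Rightarrow> bool" where
  "POH S \<longleftrightarrow> (\<exists>xs. mset xs = S \<and> hprod xs = (0,0,0))"

lemma hprod_Nil[simp]: "hprod [] = (0,0,0)" by (simp add: hprod_def)
lemma hprod_Cons[simp]: "hprod (x # xs) = hmul x (hprod xs)" by (simp add: hprod_def)

lemma hmul_assoc: "hmul (hmul x y) z = hmul x (hmul y z)"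
  by (simp add: hmul_def algebra_simps)

lemma hmul_one[simp]: "hmul x (0,0,0) = x" "hmul (0,0,0) x = x"
  by (simp_all add: hmul_def)

lemma hprod_append: "hprod (xs @ ys) = hmul (hprod xs) (hprod ys)"
  by (induct xs) (simp_all add: hmul_assoc)

lemma fst_hprod: "fst (hprod xs) = sum_list (map fst xs)"
  by (induct xs) (simp_all add: hmul_def)

lemma pb_hprod: "pb (hprod xs) = sum_list (map pb xs)"
  by (induct xs) (simp_all add: hmul_def)

lemma pc_hprod_append: "pc (hprod (xs @ ys)) = pc (hprod xs) + pc (hprod ys) + pb (hprod xs) * fst (hprod ys)"
  by (simp add: hprod_append hmul_def)

lemma pc_hprod_Cons: "pc (hprod (x # ys)) = pc x + pc (hprod ys) + pb x * fst (hprod ys)"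
  by (simp add: hmul_def)

lemma sa_mset: "sa (mset xs) = sum_list (map fst xs)"
  by (induct xs) (simp_all add: sa_def)
lemma sb_mset: "sb (mset xs) = sum_list (map pb xs)"
  by (induct xs) (simp_all add: sb_def)

lemma hprod_zero_iff: "hprod xs = (0,0,0) \<longleftrightarrow> sa (mset xs) = 0 \<and> sb (mset xs) = 0 \<and> pc (hprod xs) = 0"
  by (cases "hprod xs") (auto simp add: sa_mset sb_mset fst_hprod[symmetric] pb_hprod[symmetric])

lemma swap_pc: "pc (hprod (l1 @ p # q # l2)) = pc (hprod (l1 @ q # p # l2)) + om p q"
  by (simp add: pc_hprod_append hmul_def om_def fst_hprod pb_hprod algebra_simps)

lemma F3_ne0_four: 
  fixes t e1 e2 :: 3
  assumes "e1 \<noteq> 0" "e2 \<noteq> 0"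
  shows "t = 0 \<or> t + e1 = 0 \<or> t + e2 = 0 \<or> t + e1 + e2 = 0"
  using assms F3_cases[of t] F3_cases[of e1] F3_cases[of e2] by auto

lemma L1:
  assumes "om p1 q1 \<noteq> 0" "om p2 q2 \<noteq> 0"
    and "sa (mset (p1 # q1 # p2 # q2 # rs)) = 0" "sb (mset (p1 # q1 # p2 # q2 # rs)) = 0"
  shows "POH (mset (p1 # q1 # p2 # q2 # rs))"
proof -
  define t where "t = pc (hprod (q1 # p1 # q2 # p2 # rs))"
  have e1: "pc (hprod (p1 # q1 # q2 # p2 # rs)) = t + om p1 q1"
    using swap_pc[of "[]" p1 q1 "q2 # p2 # rs"] by (simp add: t_def)
  have e2: "pc (hprod (q1 # p1 # p2 # q2 # rs)) = t + om p2 q2"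
    using swap_pc[of "[q1,p1]" p2 q2 rs] by (simp add: t_def)
  have e3: "pc (hprod (p1 # q1 # p2 # q2 # rs)) = t + om p1 q1 + om p2 q2"
    using swap_pc[of "[]" p1 q1 "p2 # q2 # rs"] swap_pc[of "[q1,p1]" p2 q2 rs] by (simp add: t_def)
  have ms: "mset (q1 # p1 # q2 # p2 # rs) = mset (p1 # q1 # p2 # q2 # rs)"
           "mset (p1 # q1 # q2 # p2 # rs) = mset (p1 # q1 # p2 # q2 # rs)"
           "mset (q1 # p1 # p2 # q2 # rs) = mset (p1 # q1 # p2 # q2 # rs)"
    by (simp_all add: add_mset_commute)
  have S: "sa (mset xs) = 0 \<and> sb (mset xs) = 0" if "mset xs = mset (p1 # q1 # p2 # q2 # rs)" for xs
    using that assms(3,4) by simp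
  from F3_ne0_four[OF assms(1,2), of t] show ?thesis
  proof (elim disjE)
    assume "t = 0" then show ?thesis unfolding POH_def hprod_zero_iff using S[OF ms(1)] ms(1) t_def by (intro exI[of _ "q1 # p1 # q2 # p2 # rs"] conjI) auto
  next
    assume "t + om p1 q1 = 0" then show ?thesis unfolding POH_def hprod_zero_iff using S[OF ms(2)] ms(2) e1 by (intro exI[of _ "p1 # q1 # q2 # p2 # rs"] conjI) auto
  next
    assume "t + om p2 q2 = 0" then show ?thesis unfolding POH_def hprod_zero_iff using S[OF ms(3)] ms(3) e2 by (intro exI[of _ "q1 # p1 # p2 # q2 # rs"] conjI) auto
  next
    assume "t + om p1 q1 + om p2 q2 = 0" then show ?thesis unfolding POH_def hprod_zero_iff using S[OF refl] e3 by (intro exI[of _ "p1 # q1 # p2 # q2 # rs"] conjI) auto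
  qed
qed

lemma F3_three_zero[simp]: "(3::3) = 0" by simp

lemma F3_three: "(z::3) + z + z = 0"
  using F3_cases[of z] by auto

lemma F3_mult_eq0: "(a::3) * b = 0 \<Longrightarrow> a = 0 \<or> b = 0"
  using F3_cases[of a] F3_cases[of b] by auto

lemma om_self[simp]: "om x x = 0" by (simp add: om_def algebra_simps)
lemma om_antisym: "om x y = - om y x" by (simp add: om_def)

lemma central_om: "central x \<Longrightarrow> om x y = 0" "central x \<Longrightarrow> om y x = 0"
  by (auto simp: central_def om_def)

lemma same_line:
  assumes "\<not> central r" "om x r = 0" "om y r = 0" shows "om x y = 0"
proof -
  have hx: "pb x * fst r = pb r * fst x" using assms(2) by (simp add: om_def)
  have hy: "pb y * fst r = pb r * fst y" using assms(3) by (simp add: om_def)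
  have "fst r * om x y = fst y * (pb x * fst r) - fst x * (pb y * fst r)" by (simp add: om_def algebra_simps)
  also have "\<dots> = 0" unfolding hx hy by (simp add: algebra_simps)
  finally have 1: "fst r * om x y = 0" .
  have "pb r * om x y = pb x * (pb r * fst y) - pb y * (pb r * fst x)" by (simp add: om_def algebra_simps)
  also have "\<dots> = 0" unfolding hx[symmetric] hy[symmetric] by (simp add: algebra_simps)
  finally have 2: "pb r * om x y = 0" .
  show ?thesis using 1 2 assms(1) F3_mult_eq0 unfolding central_def by blast
qed

lemma sum_om:
  "sum_mset (image_mset (\<lambda>s. om s y) S) = sb S * fst y - pb y * sa S"
  by (induct S) (simp_all add: sa_def sb_def om_def algebra_simps)

lemma sum_om_zero:
  "sa S = 0 \<Longrightarrow> sb S = 0 \<Longrightarrow> sum_mset (image_mset (\<lambda>s. om s y) S) = 0"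
  by (simp add: sum_om)

lemma sa_add[simp]: "sa (A + B) = sa A + sa B" and sb_add[simp]: "sb (A + B) = sb A + sb B"
  and spsi_add[simp]: "spsi (A + B) = spsi A + spsi B"
  by (simp_all add: sa_def sb_def spsi_def)
lemma sa_single[simp]: "sa (add_mset x A) = fst x + sa A" and sb_single[simp]: "sb (add_mset x A) = pb x + sb A"
  and spsi_single[simp]: "spsi (add_mset x A) = psi x + spsi A"
  and sa_empty[simp]: "sa {#} = 0" and sb_empty[simp]: "sb {#} = 0" and spsi_empty[simp]: "spsi {#} = 0"
  by (simp_all add: sa_def sb_def spsi_def)

definition nondeg :: "h multiset \<Rightarrow> bool" where
  "nondeg S \<longleftrightarrow> (\<exists>p1 q1 p2 q2. {#p1, q1, p2, q2#} \<subseteq># S \<and> om p1 q1 \<noteq> 0 \<and> om p2 q2 \<noteq> 0)"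

lemma L1m:
  assumes "nondeg S" "sa S = 0" "sb S = 0" shows "POH S"
proof -
  obtain p1 q1 p2 q2 where P: "{#p1, q1, p2, q2#} \<subseteq># S" "om p1 q1 \<noteq> 0" "om p2 q2 \<noteq> 0"
    using assms(1) unfolding nondeg_def by blast
  obtain rs where rs: "mset rs = S - {#p1, q1, p2, q2#}" using ex_mset by blast
  have "S = {#p1, q1, p2, q2#} + (S - {#p1, q1, p2, q2#})"
    using subset_mset.add_diff_inverse[OF P(1)] by simp
  then have S: "S = mset (p1 # q1 # p2 # q2 # rs)" using rs by simp
  show ?thesis unfolding S by (rule L1[OF P(2,3)]) (use assms S in auto)
qed

lemma L2:
  assumes "\<forall>x\<in>set xs. \<forall>y\<in>set xs. om x y = 0"
  shows "pc (hprod xs) = sum_list (map psi xs) - sum_list (map fst xs) * sum_list (map pb xs)"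
  using assms
proof (induct xs)
  case Nil then show ?case by simp
next
  case (Cons x xs)
  define A where "A = sum_list (map fst xs)"
  define B where "B = sum_list (map pb xs)"
  have IH: "pc (hprod xs) = sum_list (map psi xs) - A * B" using Cons by (simp add: A_def B_def)
  have h: "pb x * fst y = fst x * pb y" if "y \<in> set xs" for y
  proof -
    have "om x y = 0" using Cons(2) that by simp
    then show ?thesis by (simp add: om_def mult.commute)
  qed
  have "sum_list (map (\<lambda>y. pb x * fst y) xs) = sum_list (map (\<lambda>y. fst x * pb y) xs)"
    by (rule arg_cong[where f = sum_list], rule map_cong[OF refl h])
  then have c: "pb x * A = fst x * B" unfolding A_def B_def by (simp only: sum_list_const_mult)
  have "pc (hprod (x # xs)) = pc x + (sum_list (map psi xs) - A * B) + pb x * A"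
    unfolding pc_hprod_Cons IH by (simp add: fst_hprod A_def)
  also have "\<dots> = psi x + sum_list (map psi xs) - (fst x + A) * (pb x + B) + (pb x * A + pb x * A + pb x * A)"
    using c by (simp add: psi_def algebra_simps)
  also have "\<dots> = psi x + sum_list (map psi xs) - (fst x + A) * (pb x + B)" by (simp add: F3_three)
  finally show ?case by (simp add: A_def B_def)
qed

definition commS :: "h multiset \<Rightarrow> bool" where
  "commS S \<longleftrightarrow> (\<forall>x\<in>#S. \<forall>y\<in>#S. om x y = 0)"

lemma L2m:
  assumes "commS S" "sa S = 0" "sb S = 0" "spsi S = 0" shows "POH S"
proof -
  obtain xs where xs: "mset xs = S" using ex_mset by blast
  have "pc (hprod xs) = sum_list (map psi xs) - sum_list (map fst xs) * sum_list (map pb xs)"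
    by (rule L2) (use assms(1) xs in \<open>auto simp: commS_def\<close>)
  moreover have "sum_list (map psi xs) = spsi S" unfolding xs[symmetric] by (induct xs) simp_all
  ultimately have "pc (hprod xs) = 0" using assms xs by (simp add: sa_mset[symmetric] sb_mset[symmetric])
  then show ?thesis unfolding POH_def using xs assms by (auto simp: hprod_zero_iff)
qed

lemma hprod_central: "\<forall>c\<in>set cs. central c \<Longrightarrow> hprod cs = (0, 0, sum_list (map pc cs))"
  by (induct cs) (auto simp: hmul_def central_def)

lemma psi_central: "central c \<Longrightarrow> psi c = pc c" by (simp add: psi_def central_def)

lemma F3_L3aux:
  fixes t1 t2 s w :: 3
  assumes "t1 = t2 + w" "w \<noteq> 0" "t1 + t2 + s = 0" "s \<noteq> 0"
  shows "t1 = 0 \<or> t2 = 0"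
  using assms F3_cases[of t2] F3_cases[of w] F3_cases[of s] by auto

lemma L3:
  assumes "fst p + fst q + fst r = 0" "pb p + pb q + pb r = 0" "om p q \<noteq> 0"
    and "\<forall>c\<in>#C. central c" and "spsi ({#p, q, r#} + C) \<noteq> 0"
  shows "POH ({#p, q, r#} + C)"
proof -
  obtain cs where cs: "mset cs = C" using ex_mset by blast
  have cen: "\<forall>c\<in>set cs. central c" using assms(4) cs by auto
  define T1 where "T1 = pc (hprod (p # q # r # cs))"
  define T2 where "T2 = pc (hprod (q # p # r # cs))"
  have d: "T1 = T2 + om p q" unfolding T1_def T2_def using swap_pc[of "[]" p q "r # cs"] by simp
  have spc: "spsi C = sum_list (map pc cs)"
    using cen unfolding cs[symmetric] by (induct cs) (auto simp: psi_central)
  have ar: "fst r = - fst p - fst q" using assms(1) by (simp add: algebra_simps eq_neg_iff_add_eq_0)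
  have br: "pb r = - pb p - pb q" using assms(2) by (simp add: algebra_simps eq_neg_iff_add_eq_0)
  have e1: "T1 = pc p + pc q + pc r + sum_list (map pc cs) + pb p * fst q + pb p * fst r + pb q * fst r"
    unfolding T1_def by (simp add: hmul_def hprod_central[OF cen] algebra_simps)
  have e2: "T2 = pc p + pc q + pc r + sum_list (map pc cs) + pb q * fst p + pb q * fst r + pb p * fst r"
    unfolding T2_def by (simp add: hmul_def hprod_central[OF cen] algebra_simps)
  have sp: "spsi ({#p, q, r#} + C) = psi p + psi q + psi r + sum_list (map pc cs)"
    using spc by (simp add: algebra_simps)
  have "T1 + T2 + spsi ({#p, q, r#} + C) =
        (pc p + pc q + pc r + sum_list (map pc cs)) * 3
        + (fst p * pb p + fst q * pb q + fst p * pb q + fst q * pb p) * 3"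
    unfolding e1 e2 sp psi_def ar br by (simp add: algebra_simps)
  then have s: "T1 + T2 + spsi ({#p, q, r#} + C) = 0" by simp
  from F3_L3aux[OF d assms(3) s assms(5)] have "T1 = 0 \<or> T2 = 0" .
  moreover have "sa (mset (p # q # r # cs)) = 0" "sb (mset (p # q # r # cs)) = 0"
  proof -
    have "sum_list (map fst cs) = 0" "sum_list (map pb cs) = 0" using cen by (induct cs) (auto simp: central_def)
    then show "sa (mset (p # q # r # cs)) = 0" "sb (mset (p # q # r # cs)) = 0"
      unfolding sa_mset sb_mset using assms(1,2) by (simp_all add: algebra_simps)
  qed
  ultimately show ?thesis unfolding POH_def
  proof (elim disjE)
    assume "T1 = 0" "sa (mset (p # q # r # cs)) = 0" "sb (mset (p # q # r # cs)) = 0"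
    then show "\<exists>xs. mset xs = {#p, q, r#} + C \<and> hprod xs = (0, 0, 0)"
      unfolding hprod_zero_iff T1_def using cs by (intro exI[of _ "p # q # r # cs"]) auto
  next
    assume "T2 = 0" "sa (mset (p # q # r # cs)) = 0" "sb (mset (p # q # r # cs)) = 0"
    then show "\<exists>xs. mset xs = {#p, q, r#} + C \<and> hprod xs = (0, 0, 0)"
      unfolding hprod_zero_iff T2_def using cs by (intro exI[of _ "q # p # r # cs"]) (auto simp: add_mset_commute)
  qed
qed

lemma two_sub: "s \<in># R \<Longrightarrow> t \<in># R \<Longrightarrow> s \<noteq> t \<Longrightarrow> {#s, t#} \<subseteq># R"
  by (simp add: insert_subset_eq_iff in_diff_count)

lemma om_ne_noncentral: "om x y \<noteq> 0 \<Longrightarrow> \<not> central x \<and> \<not> central y"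
  using central_om by blast

lemma central_sums: "\<forall>c\<in>#C. central c \<Longrightarrow> sa C = 0 \<and> sb C = 0"
  by (induct C) (auto simp: central_def)

lemma classify:
  assumes sums: "sa S = 0" "sb S = 0" and nd: "\<not> nondeg S" and xy: "{#x, y#} \<subseteq># S" "om x y \<noteq> 0"
  shows "\<exists>r C. S = {#x, y, r#} + C \<and> (\<forall>c\<in>#C. central c) \<and> om x r \<noteq> 0 \<and> om y r \<noteq> 0 \<and> \<not> central r"
proof -
  define R where "R = S - {#x, y#}"
  have SR: "S = {#x, y#} + R" unfolding R_def using subset_mset.add_diff_inverse[OF xy(1)] by simp
  have Rc2: "om s t = 0" if "{#s, t#} \<subseteq># R" for s t
  proof (rule ccontr)
    assume "om s t \<noteq> 0"
    moreover have "{#x, y, s, t#} \<subseteq># S"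
    proof -
      have "{#x, y#} + {#s, t#} \<subseteq># {#x, y#} + R" using that by (rule subset_mset.add_left_mono)
      then show ?thesis using SR by simp
    qed
    ultimately have "nondeg S" unfolding nondeg_def using xy(2) by blast
    with nd show False by simp
  qed
  have Rc: "om s t = 0" if "s \<in># R" "t \<in># R" for s t
  proof (cases "s = t")
    case True then show ?thesis by simp
  next
    case False then show ?thesis using Rc2 two_sub[OF that] by blast
  qed
  have sumx: "om y x + sum_mset (image_mset (\<lambda>s. om s x) R) = 0"
    using sum_om_zero[OF sums, of x] unfolding SR by simp
  have sumy: "om x y + sum_mset (image_mset (\<lambda>s. om s y) R) = 0"
    using sum_om_zero[OF sums, of y] unfolding SR by simp
  have A: "om x r \<noteq> 0" if "r \<in># R" "\<not> central r" for r
  proof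
    assume xr: "om x r = 0"
    have "\<forall>s\<in>#R. om s x = 0"
    proof
      fix s assume "s \<in># R"
      then have "om s r = 0" using Rc that(1) by blast
      then have "om x s = 0" using same_line[OF that(2) xr] by simp
      then show "om s x = 0" using om_antisym[of s x] by simp
    qed
    then have "sum_mset (image_mset (\<lambda>s. om s x) R) = 0" by (induct R) auto
    then have "om y x = 0" using sumx by simp
    then show False using xy(2) om_antisym[of x y] by simp
  qed
  have B: "om y r \<noteq> 0" if "r \<in># R" "\<not> central r" for r
  proof
    assume yr: "om y r = 0"
    have "\<forall>s\<in>#R. om s y = 0"
    proof
      fix s assume "s \<in># R"
      then have "om s r = 0" using Rc that(1) by blast
      then have "om y s = 0" using same_line[OF that(2) yr] by simp
      then show "om s y = 0" using om_antisym[of s y] by simp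
    qed
    then have "sum_mset (image_mset (\<lambda>s. om s y) R) = 0" by (induct R) auto
    then have "om x y = 0" using sumy by simp
    then show False using xy(2) by simp
  qed
  define R' where "R' = filter_mset (\<lambda>s. \<not> central s) R"
  define C where "C = filter_mset central R"
  have RR: "R = R' + C" unfolding R'_def C_def using multiset_partition[of R central] by (simp add: add.commute)
  have Ccen: "\<forall>c\<in>#C. central c" unfolding C_def by simp
  consider "size R' = 0" | "size R' = 1" | "size R' \<ge> 2" by linarith
  then show ?thesis
  proof cases
    case 1
    then have "R' = {#}" by simp
    then have "sa R = 0" "sb R = 0" using central_sums[OF Ccen] RR by auto
    then have "fst y = - fst x" "pb y = - pb x" using sums SR by (simp_all add: eq_neg_iff_add_eq_0 algebra_simps)
    then have "om x y = 0" by (simp add: om_def algebra_simps)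
    with xy(2) show ?thesis by simp
  next
    case 2
    then obtain r where r: "R' = {#r#}" using size_1_singleton_mset by blast
    then have "r \<in># R'" by simp
    then have rR: "r \<in># R" "\<not> central r" unfolding R'_def by simp_all
    show ?thesis
      by (intro exI[of _ r] exI[of _ C]) (use SR RR r Ccen A[OF rR] B[OF rR] rR in auto)
  next
    case 3
    then have "R' \<noteq> {#}" by auto
    then obtain r1 where r1: "r1 \<in># R'" by blast
    have "size (R' - {#r1#}) \<ge> 1" using 3 r1 by (simp add: size_Diff_submset)
    then have "R' - {#r1#} \<noteq> {#}" by auto
    then obtain r2 where r2: "r2 \<in># R' - {#r1#}" by blast
    have sub: "{#r1, r2#} \<subseteq># R'" using r1 r2 by (simp add: insert_subset_eq_iff)
    then have sub': "{#r1, r2#} \<subseteq># R" unfolding RR by (simp add: subset_mset.add_increasing2)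
    have nc: "r1 \<in># R" "\<not> central r1" "r2 \<in># R" "\<not> central r2"
      using sub sub' unfolding R'_def by (auto dest: mset_subset_eqD)
    have "{#x, r1, y, r2#} \<subseteq># S"
    proof -
      have "{#x, y#} + {#r1, r2#} \<subseteq># {#x, y#} + R" using sub' by (rule subset_mset.add_left_mono)
      then show ?thesis using SR by (simp add: add_mset_commute)
    qed
    then have "nondeg S" unfolding nondeg_def using A[OF nc(1,2)] B[OF nc(3,4)] by blast
    with nd show ?thesis by simp
  qed
qed

lemma mset_nth_image: "mset zs = image_mset (nth zs) (mset_set {..<length zs})"
proof -
  have "mset zs = mset (map (nth zs) [0..<length zs])" by (simp add: map_nth)
  also have "\<dots> = image_mset (nth zs) (mset_set {..<length zs})" by (simp add: atLeast0LessThan)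
  finally show ?thesis .
qed

lemma idx_sub:
  assumes "I \<subseteq> {..<length zs}"
  shows "image_mset (nth zs) (mset_set I) \<subseteq># mset zs"
proof -
  have "mset_set I \<subseteq># mset_set {..<length zs}" using assms by (intro subset_imp_msubset_mset_set) auto
  then show ?thesis unfolding mset_nth_image[of zs] by (rule image_mset_subseteq_mono)
qed

lemma idx_sum: "sum_mset (image_mset f (image_mset (nth zs) (mset_set I))) = (\<Sum>i\<in>I. f (zs ! i))"
  by (simp add: sum_unfold_sum_mset image_mset.compositionality comp_def)

lemma D5:
  assumes "size Z = 5"
  shows "\<exists>B. B \<subseteq># Z \<and> B \<noteq> {#} \<and> sa B = 0 \<and> sb B = 0"
proof -
  obtain zs where zs: "mset zs = Z" using ex_mset by blast
  then have len: "length zs = 5" using assms by auto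
  obtain I where I: "I \<subseteq> {..<5}" "I \<noteq> {}" "(\<Sum>i\<in>I. fst (zs ! i)) = 0" "(\<Sum>i\<in>I. pb (zs ! i)) = 0"
    using cw_D[of "\<lambda>i. fst (zs ! i)" "\<lambda>i. pb (zs ! i)"] by blast
  have fI: "finite I" using I(1) finite_subset by blast
  define B where "B = image_mset (nth zs) (mset_set I)"
  have "B \<subseteq># Z" unfolding B_def zs[symmetric] by (rule idx_sub) (use I len in simp)
  moreover have "B \<noteq> {#}" unfolding B_def using I(2) fI by (simp add: mset_set_empty_iff)
  moreover have "sa B = 0" "sb B = 0" unfolding B_def sa_def sb_def idx_sum using I by simp_all
  ultimately show ?thesis by blast
qed

lemma E33:
  assumes "size M = 33"
  shows "\<exists>T. T \<subseteq># M \<and> size T = 27 \<and> sa T = 0 \<and> sb T = 0 \<and> spsi T = 0"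
proof -
  obtain zs where zs: "mset zs = M" using ex_mset by blast
  then have len: "length zs = 33" using assms by auto
  obtain I where I: "I \<subseteq> {..<33}" "card I = 27" "(\<Sum>i\<in>I. fst (zs ! i)) = 0" "(\<Sum>i\<in>I. pb (zs ! i)) = 0"
      "(\<Sum>i\<in>I. psi (zs ! i)) = 0"
    using cw_E[of "\<lambda>i. fst (zs ! i)" "\<lambda>i. pb (zs ! i)" "\<lambda>i. psi (zs ! i)"] by blast
  have fI: "finite I" using I(1) finite_subset by blast
  define T where "T = image_mset (nth zs) (mset_set I)"
  have "T \<subseteq># M" unfolding T_def zs[symmetric] by (rule idx_sub) (use I len in simp)
  moreover have "size T = 27" unfolding T_def using I(2) fI by (simp add: mset_set_empty_iff)
  moreover have "sa T = 0" "sb T = 0" "spsi T = 0" unfolding T_def sa_def sb_def spsi_def idx_sum using I by simp_all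
  ultimately show ?thesis by blast
qed

lemma exists_sub_size:
  assumes "k \<le> size M" shows "\<exists>S. S \<subseteq># M \<and> size S = k"
proof -
  obtain xs where xs: "mset xs = M" using ex_mset by blast
  have "mset xs = mset (take k xs) + mset (drop k xs)"
    by (metis append_take_drop_id mset_append)
  then have "mset (take k xs) \<subseteq># M" using xs by (metis mset_subset_eq_add_left)
  moreover have "size (mset (take k xs)) = k" using assms xs by auto
  ultimately show ?thesis by blast
qed

lemma nondeg_mono: "nondeg A \<Longrightarrow> A \<subseteq># B \<Longrightarrow> nondeg B"
  unfolding nondeg_def using subset_mset.order_trans by blast

lemma nondeg_of:
  assumes "\<forall>s\<in>#B. \<not> central s" "sa B = 0" "sb B = 0" "{#u, v#} \<subseteq># B" "om u v \<noteq> 0" "size B \<noteq> 3"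
  shows "nondeg B"
proof (rule ccontr)
  assume "\<not> nondeg B"
  from classify[OF assms(2,3) this assms(4,5)] obtain r C where
    rc: "B = {#u, v, r#} + C" "\<forall>c\<in>#C. central c" by blast
  have "C = {#}"
  proof (rule ccontr)
    assume "C \<noteq> {#}"
    then obtain c where c: "c \<in># C" by blast
    have "central c" using rc(2) c by blast
    moreover have "c \<in># B" using rc(1) c by simp
    ultimately show False using assms(1) by blast
  qed
  then show False using rc assms(6) by simp
qed

lemma three_sub: "a \<in># Y \<Longrightarrow> b \<in># Y \<Longrightarrow> c \<in># Y \<Longrightarrow> a \<noteq> b \<Longrightarrow> a \<noteq> c \<Longrightarrow> b \<noteq> c \<Longrightarrow> {#a, b, c#} \<subseteq># Y"
  by (simp add: insert_subset_eq_iff in_diff_count)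

lemma getYf:
  assumes "size Y = 4" "\<not> central f"
    and nz: "\<And>B'. B' \<subseteq># Y \<Longrightarrow> B' \<noteq> {#} \<Longrightarrow> sa B' = 0 \<Longrightarrow> sb B' = 0 \<Longrightarrow> False"
  shows "\<exists>Y'. Y' \<subseteq># Y \<and> Y' \<noteq> {#} \<and> sa Y' = fst f \<and> sb Y' = pb f"
proof -
  define g :: h where "g = (- fst f, - pb f, 0)"
  have "size (add_mset g Y) = 5" using assms(1) by simp
  from D5[OF this] obtain B where B: "B \<subseteq># add_mset g Y" "B \<noteq> {#}" "sa B = 0" "sb B = 0" by blast
  show ?thesis
  proof (cases "g \<in># B")
    case False
    have "B \<subseteq># Y" unfolding subseteq_mset_def
    proof
      fix a
      have "count B a \<le> count (add_mset g Y) a" using B(1) by (rule mset_subset_eq_count)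
      then show "count B a \<le> count Y a" using False by (cases "a = g") (simp_all add: not_in_iff del: prod.collapse)
    qed
    then show ?thesis using nz B by blast
  next
    case True
    define Y' where "Y' = B - {#g#}"
    have BY: "B = add_mset g Y'" unfolding Y'_def using True by simp
    have "Y' \<subseteq># Y" using B(1) unfolding BY by simp
    moreover have "sa Y' = fst f" "sb Y' = pb f" using B(3,4) unfolding BY g_def
      by (simp_all add: eq_neg_iff_add_eq_0 add.commute)
    moreover have "Y' \<noteq> {#}"
    proof
      assume "Y' = {#}"
      then have "fst f = 0" "pb f = 0" using B(3,4) unfolding BY g_def by simp_all
      then show False using assms(2) unfolding central_def by simp
    qed
    ultimately show ?thesis by blast
  qed
qed

lemma Vlemma:
  assumes om: "om p q \<noteq> 0" "om p r \<noteq> 0" "om q r \<noteq> 0"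
    and s: "fst p + fst q + fst r = 0" "pb p + pb q + pb r = 0"
    and Y: "size Y = 4" "\<forall>y\<in>#Y. \<not> central y"
  shows "\<exists>B. B \<subseteq># {#p, q, r#} + Y \<and> sa B = 0 \<and> sb B = 0 \<and> nondeg B"
proof (cases "\<exists>B'. B' \<subseteq># Y \<and> B' \<noteq> {#} \<and> sa B' = 0 \<and> sb B' = 0")
  case True
  then obtain B' where B': "B' \<subseteq># Y" "B' \<noteq> {#}" "sa B' = 0" "sb B' = 0" by blast
  define B where "B = {#p, q, r#} + B'"
  have nc: "\<forall>s\<in>#B. \<not> central s" using om_ne_noncentral om B' Y unfolding B_def by (auto dest: mset_subset_eqD)
  have sz: "size B \<noteq> 3" using B'(2) unfolding B_def by simp
  have sums: "sa B = 0" "sb B = 0" using s B' unfolding B_def by (simp_all add: algebra_simps)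
  have sub: "{#p, q#} \<subseteq># B" unfolding B_def by (simp add: insert_subset_eq_iff)
  have "nondeg B" by (rule nondeg_of[OF nc sums sub om(1) sz])
  moreover have "B \<subseteq># {#p, q, r#} + Y" unfolding B_def using B'(1) by simp
  moreover note sums
  ultimately show ?thesis by blast
next
  case False
  then have nz: "\<And>B'. B' \<subseteq># Y \<Longrightarrow> B' \<noteq> {#} \<Longrightarrow> sa B' = 0 \<Longrightarrow> sb B' = 0 \<Longrightarrow> False" by blast
  have ncp: "\<not> central p" "\<not> central q" "\<not> central r" using om_ne_noncentral om by blast+
  obtain Yp where Yp0: "Yp \<subseteq># Y \<and> Yp \<noteq> {#} \<and> sa Yp = fst p \<and> sb Yp = pb p"
    using getYf[OF Y(1) ncp(1) nz] by (rule exE)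
  note Yp = conjunct1[OF Yp0] conjunct1[OF conjunct2[OF Yp0]] conjunct1[OF conjunct2[OF conjunct2[OF Yp0]]] conjunct2[OF conjunct2[OF conjunct2[OF Yp0]]]
  obtain Yq where Yq0: "Yq \<subseteq># Y \<and> Yq \<noteq> {#} \<and> sa Yq = fst q \<and> sb Yq = pb q"
    using getYf[OF Y(1) ncp(2) nz] by (rule exE)
  note Yq = conjunct1[OF Yq0] conjunct1[OF conjunct2[OF Yq0]] conjunct1[OF conjunct2[OF conjunct2[OF Yq0]]] conjunct2[OF conjunct2[OF conjunct2[OF Yq0]]]
  obtain Yr where Yr0: "Yr \<subseteq># Y \<and> Yr \<noteq> {#} \<and> sa Yr = fst r \<and> sb Yr = pb r"
    using getYf[OF Y(1) ncp(3) nz] by (rule exE)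
  note Yr = conjunct1[OF Yr0] conjunct1[OF conjunct2[OF Yr0]] conjunct1[OF conjunct2[OF conjunct2[OF Yr0]]] conjunct2[OF conjunct2[OF conjunct2[OF Yr0]]]
  have ncY: "\<forall>s\<in>#W. \<not> central s" if "W \<subseteq># Y" for W using that Y(2) by (auto dest: mset_subset_eqD)
  have "size Yp \<noteq> 0" "size Yq \<noteq> 0" "size Yr \<noteq> 0" using Yp(2) Yq(2) Yr(2) by auto
  then consider "size Yp \<ge> 2" | "size Yq \<ge> 2" | "size Yr \<ge> 2" | "size Yp = 1" "size Yq = 1" "size Yr = 1"
    by linarith
  then show ?thesis
  proof cases
    case 1
    define B where "B = {#q, r#} + Yp"
    have nc: "\<forall>s\<in>#B. \<not> central s" using ncp ncY[OF Yp(1)] unfolding B_def by auto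
    have sums: "sa B = 0" "sb B = 0" using s Yp unfolding B_def by (simp_all add: algebra_simps)
    have sub: "{#q, r#} \<subseteq># B" unfolding B_def by simp
    have sz: "size B \<noteq> 3" using 1 unfolding B_def by simp
    from nondeg_of[OF nc sums sub om(3) sz] have "nondeg B" .
    moreover have "B \<subseteq># {#p, q, r#} + Y" unfolding B_def
      by (rule mset_subset_eq_mono_add[OF _ Yp(1)]) (simp add: insert_subset_eq_iff)
    moreover note sums
    ultimately show ?thesis by blast
  next
    case 2
    define B where "B = {#p, r#} + Yq"
    have nc: "\<forall>s\<in>#B. \<not> central s" using ncp ncY[OF Yq(1)] unfolding B_def by auto
    have sums: "sa B = 0" "sb B = 0" using s Yq unfolding B_def by (simp_all add: algebra_simps)
    have sub: "{#p, r#} \<subseteq># B" unfolding B_def by simp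
    have sz: "size B \<noteq> 3" using 2 unfolding B_def by simp
    from nondeg_of[OF nc sums sub om(2) sz] have "nondeg B" .
    moreover have "B \<subseteq># {#p, q, r#} + Y" unfolding B_def
      by (rule mset_subset_eq_mono_add[OF _ Yq(1)]) (simp add: insert_subset_eq_iff)
    moreover note sums
    ultimately show ?thesis by blast
  next
    case 3
    define B where "B = {#p, q#} + Yr"
    have nc: "\<forall>s\<in>#B. \<not> central s" using ncp ncY[OF Yr(1)] unfolding B_def by auto
    have sums: "sa B = 0" "sb B = 0" using s Yr unfolding B_def by (simp_all add: algebra_simps)
    have sub: "{#p, q#} \<subseteq># B" unfolding B_def by simp
    have sz: "size B \<noteq> 3" using 3 unfolding B_def by simp
    from nondeg_of[OF nc sums sub om(1) sz] have "nondeg B" .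
    moreover have "B \<subseteq># {#p, q, r#} + Y" unfolding B_def
      by (rule mset_subset_eq_mono_add[OF _ Yr(1)]) (simp add: insert_subset_eq_iff)
    moreover note sums
    ultimately show ?thesis by blast
  next
    case 4
    obtain yp where yp: "Yp = {#yp#}" using size_1_singleton_mset[OF 4(1)] by (rule exE)
    obtain yq where yq: "Yq = {#yq#}" using size_1_singleton_mset[OF 4(2)] by (rule exE)
    obtain yr where yr: "Yr = {#yr#}" using size_1_singleton_mset[OF 4(3)] by (rule exE)
    have v: "fst yp = fst p" "pb yp = pb p" "fst yq = fst q" "pb yq = pb q" "fst yr = fst r" "pb yr = pb r"
      using Yp(3,4) Yq(3,4) Yr(3,4) unfolding yp yq yr by simp_all
    have omeq: "om a b = 0" if "fst a = fst b" "pb a = pb b" for a b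
      using that by (simp add: om_def mult.commute)
    have d: "yp \<noteq> yq" "yp \<noteq> yr" "yq \<noteq> yr"
    proof -
      show "yp \<noteq> yq" proof assume "yp = yq" then have "om p q = 0" using v by (intro omeq) simp_all
        then show False using om(1) by simp qed
      show "yp \<noteq> yr" proof assume "yp = yr" then have "om p r = 0" using v by (intro omeq) simp_all
        then show False using om(2) by simp qed
      show "yq \<noteq> yr" proof assume "yq = yr" then have "om q r = 0" using v by (intro omeq) simp_all
        then show False using om(3) by simp qed
    qed
    have m: "yp \<in># Y" "yq \<in># Y" "yr \<in># Y"
      using Yp(1) Yq(1) Yr(1) unfolding yp yq yr by (simp_all add: mset_subset_eq_single)
    have sub3: "{#yp, yq, yr#} \<subseteq># Y" by (rule three_sub[OF m d])
    have sa3: "sa {#yp, yq, yr#} = 0"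
    proof -
      have "sa {#yp, yq, yr#} = fst p + fst q + fst r" by (simp add: v add.assoc)
      then show ?thesis using s(1) by simp
    qed
    have sb3: "sb {#yp, yq, yr#} = 0"
    proof -
      have "sb {#yp, yq, yr#} = pb p + pb q + pb r" by (simp add: v add.assoc)
      then show ?thesis using s(2) by simp
    qed
    have False by (rule nz[OF sub3 _ sa3 sb3]) simp
    then show ?thesis ..
  qed
qed

lemma central_eq: "central c \<Longrightarrow> central d \<Longrightarrow> pc c = pc d \<Longrightarrow> c = d"
  by (cases c, cases d) (simp add: central_def)

lemma hprod_replicate_central:
  assumes "central d" shows "hprod (replicate 27 d) = (0,0,0)"
proof -
  have "hprod (replicate 27 d) = (0, 0, sum_list (map pc (replicate 27 d)))"
    by (rule hprod_central) (use assms in simp)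
  also have "sum_list (map pc (replicate 27 d)) = of_nat 27 * pc d"
    by (simp add: sum_list_replicate)
  also have "(of_nat 27 :: 3) = 0" by simp
  finally show ?thesis by simp
qed

theorem main_H:
  assumes "size M = 33"
  shows "\<exists>S. S \<subseteq># M \<and> size S = 27 \<and> POH S"
proof -
  obtain T0 where T0: "T0 \<subseteq># M" "size T0 = 27" "sa T0 = 0" "sb T0 = 0" "spsi T0 = 0"
    using E33[OF assms] by blast
  show ?thesis
  proof (cases "nondeg T0")
    case True then show ?thesis using L1m T0 by blast
  next
    case nd: False
    show ?thesis
    proof (cases "commS T0")
      case True then show ?thesis using L2m T0 by blast
    next
      case False
      then obtain x y where xy: "x \<in># T0" "y \<in># T0" "om x y \<noteq> 0" unfolding commS_def by blast
      have "x \<noteq> y" proof assume "x = y" then show False using xy(3) by simp qed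
      then have xy2: "{#x, y#} \<subseteq># T0" using two_sub[OF xy(1,2)] by simp
      obtain r C0 where rC0: "T0 = {#x, y, r#} + C0 \<and> (\<forall>c\<in>#C0. central c) \<and> om x r \<noteq> 0 \<and> om y r \<noteq> 0 \<and> \<not> central r"
        using classify[OF T0(3,4) nd xy2 xy(3)] by (elim exE) 
      then have rC: "T0 = {#x, y, r#} + C0" "\<forall>c\<in>#C0. central c" "om x r \<noteq> 0" "om y r \<noteq> 0" "\<not> central r"
        by simp_all
      have C0s: "sa C0 = 0" "sb C0 = 0" using central_sums[OF rC(2)] by auto
      have s3: "fst x + fst y + fst r = 0" "pb x + pb y + pb r = 0"
        using T0(3,4) C0s unfolding rC(1) by (simp_all add: add.assoc)
      have szC0: "size C0 = 24" using T0(2) unfolding rC(1) by simp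
      define D where "D = M - T0"
      have MD: "M = T0 + D" unfolding D_def using subset_mset.add_diff_inverse[OF T0(1)] by simp
      have "size M = size T0 + size D" using MD by simp
      then have szD: "size D = 6" using assms T0(2) by simp
      define Yc where "Yc = filter_mset central D"
      define Y where "Y = filter_mset (\<lambda>s. \<not> central s) D"
      have DY: "D = Yc + Y" unfolding Yc_def Y_def by (rule multiset_partition)
      show ?thesis
      proof (cases "\<exists>d\<in>#Yc. \<exists>c\<in>#C0. d \<noteq> c")
        case True
        then obtain d c where dc: "d \<in># Yc" "c \<in># C0" "d \<noteq> c" by blast
        have cd: "central d" "central c" using dc rC(2) unfolding Yc_def by auto
        define C1 where "C1 = add_mset d (C0 - {#c#})"
        define T1 where "T1 = {#x, y, r#} + C1"
        have C1c: "\<forall>e\<in>#C1. central e" unfolding C1_def using cd rC(2) by (auto dest: in_diffD)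
        have "spsi T1 = spsi T0 - psi c + psi d"
        proof -
          have "C0 = add_mset c (C0 - {#c#})" using dc(2) by simp
          then have "spsi C0 = psi c + spsi (C0 - {#c#})" by (metis spsi_single)
          then show ?thesis unfolding T1_def C1_def rC(1) by simp
        qed
        also have "\<dots> = pc d - pc c" using T0(5) cd by (simp add: psi_central)
        finally have "spsi T1 \<noteq> 0" using dc(3) central_eq[OF cd] by auto
        then have "POH T1" unfolding T1_def by (intro L3) (use s3 xy(3) C1c in auto)
        moreover have "T1 \<subseteq># M"
        proof -
          have "C1 \<subseteq># C0 + D"
          proof -
            have "d \<in># D" using dc(1) unfolding Yc_def by simp
            then have "{#d#} \<subseteq># D" by simp
            moreover have "C0 - {#c#} \<subseteq># C0" by simp
            ultimately have "(C0 - {#c#}) + {#d#} \<subseteq># C0 + D" by (rule mset_subset_eq_mono_add[rotated])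
            then show ?thesis unfolding C1_def by simp
          qed
          then have "{#x, y, r#} + C1 \<subseteq># {#x, y, r#} + (C0 + D)" by (rule subset_mset.add_left_mono)
          then show ?thesis unfolding T1_def MD rC(1) by (simp add: add.assoc)
        qed
        moreover have "size T1 = 27" unfolding T1_def C1_def using szC0 dc(2) by (simp add: size_Diff_submset)
        ultimately show ?thesis by blast
      next
        case noa: False
        show ?thesis
        proof (cases "size Y \<ge> 4")
          case True
          obtain Y4 where Y4: "Y4 \<subseteq># Y" "size Y4 = 4" using exists_sub_size[OF True] by blast
          have Y4nc: "\<forall>s\<in>#Y4. \<not> central s" using Y4(1) unfolding Y_def by (auto dest: mset_subset_eqD)
          obtain B where B: "B \<subseteq># {#x, y, r#} + Y4" "sa B = 0" "sb B = 0" "nondeg B"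
            using Vlemma[OF xy(3) rC(3) rC(4) s3 Y4(2) Y4nc] by blast
          have szB: "size B \<le> 7" using size_mset_mono[OF B(1)] Y4(2) by simp
          have "size B \<ge> 4"
          proof -
            obtain p1 q1 p2 q2 where "{#p1, q1, p2, q2#} \<subseteq># B" using B(4) unfolding nondeg_def by blast
            from size_mset_mono[OF this] show ?thesis by simp
          qed
          then have "27 - size B \<le> size C0" using szC0 by simp
          from exists_sub_size[OF this] obtain C' where C': "C' \<subseteq># C0" "size C' = 27 - size B" by blast
          define T where "T = B + C'"
          have C'c: "\<forall>e\<in>#C'. central e" using C'(1) rC(2) by (auto dest: mset_subset_eqD)
          have "POH T" unfolding T_def
          proof (rule L1m)
            show "nondeg (B + C')" using nondeg_mono[OF B(4)] by simp
            show "sa (B + C') = 0" "sb (B + C') = 0" using B(2,3) central_sums[OF C'c] by simp_all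
          qed
          moreover have "T \<subseteq># M"
          proof -
            have "B + C' \<subseteq># ({#x, y, r#} + Y4) + C0" by (rule mset_subset_eq_mono_add[OF B(1) C'(1)])
            moreover have "({#x, y, r#} + Y4) + C0 \<subseteq># M"
            proof -
              have "Y4 \<subseteq># D" using Y4(1) DY by (metis mset_subset_eq_add_right subset_mset.order_trans)
              then have "({#x, y, r#} + C0) + Y4 \<subseteq># ({#x, y, r#} + C0) + D" by (rule subset_mset.add_left_mono)
              then show ?thesis unfolding MD rC(1) by (simp add: ac_simps)
            qed
            ultimately show ?thesis unfolding T_def by (rule subset_mset.order_trans)
          qed
          moreover have "size T = 27" unfolding T_def using C'(2) szB by simp
          ultimately show ?thesis by blast
        next
          case False
          have szYc: "size Yc \<ge> 3" using szD DY False by simp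
          then have "Yc \<noteq> {#}" by auto
          then obtain d0 where d0: "d0 \<in># Yc" by blast
          have cd0: "central d0" using d0 unfolding Yc_def by simp
          have allC: "c = d0" if "c \<in># C0" for c
          proof (rule ccontr)
            assume "c \<noteq> d0" then have "d0 \<noteq> c" by simp
            then show False using noa d0 that by blast
          qed
          have allY: "e = d0" if "e \<in># Yc" for e
          proof -
            have "C0 \<noteq> {#}" using szC0 by auto
            then obtain c where c: "c \<in># C0" by blast
            have "e = c"
            proof (rule ccontr)
              assume "e \<noteq> c" then show False using noa that c by blast
            qed
            then show ?thesis using allC[OF c] by simp
          qed
          have "set_mset C0 \<subseteq> {d0}" using allC by blast
          from set_mset_subset_singletonD[OF this] have C0r: "C0 = replicate_mset 24 d0" using szC0 by simp
          have "set_mset Yc \<subseteq> {d0}" using allY by blast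
          from set_mset_subset_singletonD[OF this] have Ycr: "Yc = replicate_mset (size Yc) d0" .
          define T where "T = replicate_mset 27 d0"
          have "T \<subseteq># C0 + Yc"
          proof -
            have c1: "count C0 d0 = 24" by (subst C0r) simp
            have c2: "count Yc d0 = size Yc" by (subst (1) Ycr) simp
            have "27 \<le> count (C0 + Yc) d0" using c1 c2 szYc by simp
            then show ?thesis unfolding T_def using count_le_replicate_mset_subset_eq[of 27 "C0 + Yc" d0] by simp
          qed
          moreover have "C0 + Yc \<subseteq># M" unfolding MD rC(1) DY by (simp add: subset_mset.add_increasing ac_simps)
          ultimately have "T \<subseteq># M" by (rule subset_mset.order_trans)
          moreover have "size T = 27" unfolding T_def by simp
          moreover have "POH T" unfolding POH_def T_def
            by (intro exI[of _ "replicate 27 d0"]) (simp add: hprod_replicate_central[OF cd0])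
          ultimately show ?thesis by blast
        qed
      qed
    qed
  qed
qed

context group begin

lemma cube:
  assumes e3: "\<forall>g\<in>carrier G. g [^] (3::nat) = \<one>" and a: "a \<in> carrier G"
  shows "a \<otimes> a \<otimes> a = \<one>"
proof -
  have "a [^] (3::nat) = a \<otimes> a \<otimes> a" using a by (simp add: numeral_3_eq_3)
  then show ?thesis using e3 a by simp
qed

lemma inv_sq:
  assumes e3: "\<forall>g\<in>carrier G. g [^] (3::nat) = \<one>" and a: "a \<in> carrier G"
  shows "inv a = a \<otimes> a"
  by (rule inv_equality) (use cube[OF e3 a] a in auto)

lemma star:
  assumes e3: "\<forall>g\<in>carrier G. g [^] (3::nat) = \<one>" and c: "c \<in> carrier G" and d: "d \<in> carrier G"
  shows "c \<otimes> d \<otimes> c \<otimes> d = inv d \<otimes> inv c"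
proof -
  have "(c \<otimes> d) \<otimes> (c \<otimes> d) \<otimes> (c \<otimes> d) = \<one>" using cube[OF e3, of "c \<otimes> d"] c d by simp
  then have "inv (c \<otimes> d) = (c \<otimes> d) \<otimes> (c \<otimes> d)" by (intro inv_equality) (use c d in auto)
  then show ?thesis using c d by (simp add: inv_mult_group m_assoc)
qed

lemma engel:
  assumes e3: "\<forall>g\<in>carrier G. g [^] (3::nat) = \<one>" and a: "a \<in> carrier G" and b: "b \<in> carrier G"
  shows "a \<otimes> (b \<otimes> a \<otimes> inv b) = (b \<otimes> a \<otimes> inv b) \<otimes> a"
proof -
  have h1: "a \<otimes> b \<otimes> a = inv b \<otimes> inv a \<otimes> inv b"
  proof -
    have "a \<otimes> b \<otimes> a = (a \<otimes> b \<otimes> a \<otimes> b) \<otimes> inv b" using a b by (simp add: m_assoc)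
    also have "\<dots> = inv b \<otimes> inv a \<otimes> inv b" using star[OF e3 a b] by simp
    finally show ?thesis .
  qed
  have h2: "inv b \<otimes> inv b = b"
  proof -
    have "inv b \<otimes> inv b = b \<otimes> (b \<otimes> b \<otimes> b)" using inv_sq[OF e3 b] b by (simp add: m_assoc)
    then show ?thesis using cube[OF e3 b] b by simp
  qed
  have h3: "a \<otimes> inv b \<otimes> a = b \<otimes> inv a \<otimes> b"
  proof -
    have "a \<otimes> inv b \<otimes> a = (a \<otimes> inv b \<otimes> a \<otimes> inv b) \<otimes> b" using a b by (simp add: m_assoc)
    also have "\<dots> = b \<otimes> inv a \<otimes> b" using star[OF e3 a inv_closed[OF b]] b by simp
    finally show ?thesis .
  qed
  have h4: "b \<otimes> b = inv b" using inv_sq[OF e3 b] by simp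
  have "a \<otimes> (b \<otimes> a \<otimes> inv b) = (a \<otimes> b \<otimes> a) \<otimes> inv b" using a b by (simp add: m_assoc)
  also have "\<dots> = inv b \<otimes> inv a \<otimes> (inv b \<otimes> inv b)" unfolding h1 using a b by (simp add: m_assoc)
  also have "\<dots> = inv b \<otimes> inv a \<otimes> b" unfolding h2 ..
  also have "\<dots> = (b \<otimes> b) \<otimes> inv a \<otimes> b" unfolding h4 ..
  also have "\<dots> = b \<otimes> (b \<otimes> inv a \<otimes> b)" using a b by (simp add: m_assoc)
  also have "\<dots> = b \<otimes> (a \<otimes> inv b \<otimes> a)" unfolding h3 ..
  also have "\<dots> = (b \<otimes> a \<otimes> inv b) \<otimes> a" using a b by (simp add: m_assoc)
  finally show ?thesis .
qed

end

locale heis_grp = group G for G (structure) +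
  fixes x y
  assumes e3: "\<forall>g\<in>carrier G. g [^] (3::nat) = \<one>"
    and xc[simp]: "x \<in> carrier G" and yc[simp]: "y \<in> carrier G" and ncomm: "x \<otimes> y \<noteq> y \<otimes> x"
begin

definition w where "w = y \<otimes> x \<otimes> inv y \<otimes> inv x"

lemma wc[simp]: "w \<in> carrier G" unfolding w_def by simp

lemma wx: "w \<otimes> x = x \<otimes> w"
proof -
  define u where "u = y \<otimes> x \<otimes> inv y"
  have uc: "u \<in> carrier G" unfolding u_def by simp
  have e: "x \<otimes> u = u \<otimes> x" unfolding u_def using engel[OF e3 xc yc] .
  have "w \<otimes> x = u" unfolding w_def u_def by (simp add: m_assoc)
  moreover have "x \<otimes> w = u"
  proof -
    have "x \<otimes> w = (x \<otimes> u) \<otimes> inv x" unfolding w_def u_def by (simp add: m_assoc)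
    also have "\<dots> = u" unfolding e using uc by (simp add: m_assoc)
    finally show ?thesis .
  qed
  ultimately show ?thesis by simp
qed

lemma wy: "w \<otimes> y = y \<otimes> w"
proof -
  define v where "v = x \<otimes> y \<otimes> inv x"
  have vc: "v \<in> carrier G" unfolding v_def by simp
  have e: "y \<otimes> v = v \<otimes> y" unfolding v_def using engel[OF e3 yc xc] .
  have e': "y \<otimes> inv v = inv v \<otimes> y"
  proof -
    have "inv v \<otimes> y = inv v \<otimes> (y \<otimes> v) \<otimes> inv v" using vc by (simp add: m_assoc)
    also have "\<dots> = inv v \<otimes> (v \<otimes> y) \<otimes> inv v" using e by simp
    also have "\<dots> = y \<otimes> inv v" using vc by (simp add: m_assoc[symmetric])
    finally show ?thesis by simp
  qed
  have wv: "w = y \<otimes> inv v" unfolding w_def v_def by (simp add: inv_mult_group m_assoc)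
  have "y \<otimes> w = y \<otimes> (inv v \<otimes> y)" unfolding wv e' ..
  also have "\<dots> = (y \<otimes> inv v) \<otimes> y" using vc by (simp add: m_assoc)
  also have "\<dots> = w \<otimes> y" unfolding wv ..
  finally show ?thesis by simp
qed

lemma yx: "y \<otimes> x = x \<otimes> y \<otimes> w"
proof -
  have "x \<otimes> y \<otimes> w = x \<otimes> (w \<otimes> y)" by (simp add: wy m_assoc)
  also have "\<dots> = w \<otimes> x \<otimes> y" by (simp add: wx m_assoc[symmetric])
  also have "\<dots> = y \<otimes> x" unfolding w_def by (simp add: m_assoc)
  finally show ?thesis by simp
qed

lemma w_ne: "w \<noteq> \<one>"
proof
  assume "w = \<one>"
  then have "y \<otimes> x = x \<otimes> y" using yx by simp
  then show False using ncomm by simp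
qed

lemma wpow_x: "w [^] (k::nat) \<otimes> x [^] (n::nat) = x [^] n \<otimes> w [^] k"
proof -
  have "w [^] k \<otimes> x = x \<otimes> w [^] k" by (rule group_commutes_pow[OF wx]) simp_all
  then have "x \<otimes> w [^] k = w [^] k \<otimes> x" by simp
  then have "x [^] n \<otimes> w [^] k = w [^] k \<otimes> x [^] n" by (rule group_commutes_pow) simp_all
  then show ?thesis by simp
qed

lemma wpow_y: "w [^] (k::nat) \<otimes> y [^] (n::nat) = y [^] n \<otimes> w [^] k"
proof -
  have "w [^] k \<otimes> y = y \<otimes> w [^] k" by (rule group_commutes_pow[OF wy]) simp_all
  then have "y \<otimes> w [^] k = w [^] k \<otimes> y" by simp
  then have "y [^] n \<otimes> w [^] k = w [^] k \<otimes> y [^] n" by (rule group_commutes_pow) simp_all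
  then show ?thesis by simp
qed

lemma wpow_x': "w [^] (k::nat) \<otimes> (x [^] (n::nat) \<otimes> z) = x [^] n \<otimes> (w [^] k \<otimes> z)" if "z \<in> carrier G"
  using that by (simp add: m_assoc[symmetric] wpow_x)

lemma wpow_y': "w [^] (k::nat) \<otimes> (y [^] (n::nat) \<otimes> z) = y [^] n \<otimes> (w [^] k \<otimes> z)" if "z \<in> carrier G"
  using that by (simp add: m_assoc[symmetric] wpow_y)

lemma y_xpow: "y \<otimes> x [^] (n::nat) = x [^] n \<otimes> y \<otimes> w [^] n"
proof (induct n)
  case 0 then show ?case by simp
next
  case (Suc n)
  have "y \<otimes> x [^] Suc n = (y \<otimes> x [^] n) \<otimes> x" by (simp add: m_assoc)
  also have "\<dots> = x [^] n \<otimes> y \<otimes> (w [^] n \<otimes> x)" unfolding Suc by (simp add: m_assoc)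
  also have "\<dots> = x [^] n \<otimes> (y \<otimes> x) \<otimes> w [^] n" using wpow_x[of n 1] by (simp add: m_assoc)
  also have "\<dots> = x [^] n \<otimes> x \<otimes> y \<otimes> (w \<otimes> w [^] n)" unfolding yx by (simp add: m_assoc)
  also have "\<dots> = x [^] Suc n \<otimes> y \<otimes> w [^] Suc n" by (simp add: nat_pow_Suc2[symmetric])
  finally show ?case .
qed

lemma ypow_xpow: "y [^] (m::nat) \<otimes> x [^] (n::nat) = x [^] n \<otimes> y [^] m \<otimes> w [^] (m * n)"
proof (induct m)
  case 0 then show ?case by simp
next
  case (Suc m)
  have "y [^] Suc m \<otimes> x [^] n = y [^] m \<otimes> (y \<otimes> x [^] n)" by (simp add: m_assoc)
  also have "\<dots> = (y [^] m \<otimes> x [^] n) \<otimes> y \<otimes> w [^] n" unfolding y_xpow by (simp add: m_assoc)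
  also have "\<dots> = x [^] n \<otimes> y [^] m \<otimes> (w [^] (m * n) \<otimes> y) \<otimes> w [^] n" unfolding Suc by (simp add: m_assoc)
  also have "\<dots> = x [^] n \<otimes> y [^] m \<otimes> y \<otimes> (w [^] (m * n) \<otimes> w [^] n)" using wpow_y[of "m*n" 1] by (simp add: m_assoc)
  also have "\<dots> = x [^] n \<otimes> y [^] Suc m \<otimes> w [^] (Suc m * n)" by (simp add: nat_pow_mult add.commute m_assoc)
  finally show ?case .
qed

definition nf :: "nat \<Rightarrow> nat \<Rightarrow> nat \<Rightarrow> 'a" where
  "nf i j k = x [^] i \<otimes> y [^] j \<otimes> w [^] k"

lemma nf_c[simp]: "nf i j k \<in> carrier G" unfolding nf_def by simp

lemma nf_mult: "nf i j k \<otimes> nf i' j' k' = nf (i + i') (j + j') (k + k' + j * i')"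
proof -
  have "nf i j k \<otimes> nf i' j' k' = x [^] i \<otimes> (y [^] j \<otimes> x [^] i') \<otimes> (w [^] k \<otimes> (y [^] j' \<otimes> w [^] k'))"
    unfolding nf_def by (simp add: m_assoc wpow_x')
  also have "\<dots> = x [^] i \<otimes> (x [^] i' \<otimes> y [^] j \<otimes> w [^] (j * i')) \<otimes> (y [^] j' \<otimes> (w [^] k \<otimes> w [^] k'))"
    unfolding ypow_xpow by (simp add: wpow_y')
  also have "\<dots> = x [^] i \<otimes> x [^] i' \<otimes> y [^] j \<otimes> (w [^] (j * i') \<otimes> y [^] j') \<otimes> (w [^] k \<otimes> w [^] k')"
    by (simp add: m_assoc)
  also have "\<dots> = x [^] i \<otimes> x [^] i' \<otimes> (y [^] j \<otimes> y [^] j') \<otimes> (w [^] (j * i') \<otimes> (w [^] k \<otimes> w [^] k'))"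
    unfolding wpow_y by (simp add: m_assoc)
  also have "\<dots> = nf (i + i') (j + j') (k + k' + j * i')"
    unfolding nf_def by (simp add: nat_pow_mult add.commute add.left_commute)
  finally show ?thesis .
qed

lemma pow_mod3: "g \<in> carrier G \<Longrightarrow> g [^] (n::nat) = g [^] (n mod 3)"
proof -
  assume g: "g \<in> carrier G"
  have "g [^] n = g [^] (3 * (n div 3) + n mod 3)" by simp
  also have "\<dots> = g [^] (3 * (n div 3)) \<otimes> g [^] (n mod 3)" by (rule nat_pow_mult[OF g, symmetric])
  also have "\<dots> = (g [^] (3::nat)) [^] (n div 3) \<otimes> g [^] (n mod 3)"
    using g by (simp add: nat_pow_pow)
  also have "\<dots> = g [^] (n mod 3)" using e3 g by simp
  finally show ?thesis .
qed

lemma nf_mod: "nf i j k = nf (i mod 3) (j mod 3) (k mod 3)"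
  unfolding nf_def using pow_mod3[of x i] pow_mod3[of y j] pow_mod3[of w k] by simp

end

definition ex3 :: "3 \<Rightarrow> nat" where "ex3 k = (if k = 0 then 0 else if k = 1 then 1 else 2)"

lemma ex3_add: "ex3 (a + b) = (ex3 a + ex3 b) mod 3"
  using F3_cases[of a] F3_cases[of b] by (auto simp: ex3_def)

lemma ex3_mult: "ex3 (a * b) = (ex3 a * ex3 b) mod 3"
  using F3_cases[of a] F3_cases[of b] by (auto simp: ex3_def)

lemma ex3_mod: "ex3 a mod 3 = ex3 a"
  by (simp add: ex3_def)

lemma ex3_0[simp]: "ex3 0 = 0" and ex3_1[simp]: "ex3 1 = 1" by (simp_all add: ex3_def)

lemma ex3_cases: "ex3 k = 0 \<and> k = 0 \<or> ex3 k = 1 \<or> ex3 k = 2"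
  by (auto simp: ex3_def)

definition hinv :: "h \<Rightarrow> h" where "hinv h = (- fst h, - pb h, - pc h + pb h * fst h)"

lemma hmul_hinv: "hmul h (hinv h) = (0,0,0)"
  by (simp add: hmul_def hinv_def)

lemma hmul_hinv_zero: "hmul h1 (hinv h2) = (0,0,0) \<Longrightarrow> h1 = h2"
  by (cases h1, cases h2) (auto simp: hmul_def hinv_def algebra_simps eq_neg_iff_add_eq_0 add_eq_0_iff2
      simp flip: diff_eq_eq)

context heis_grp begin

definition eta :: "h \<Rightarrow> 'a" where "eta h = nf (ex3 (fst h)) (ex3 (pb h)) (ex3 (pc h))"

lemma eta_c[simp]: "eta h \<in> carrier G" unfolding eta_def by simp

lemma eta_hom: "eta (hmul h1 h2) = eta h1 \<otimes> eta h2"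
proof -
  have "eta h1 \<otimes> eta h2 = nf (ex3 (fst h1) + ex3 (fst h2)) (ex3 (pb h1) + ex3 (pb h2))
      (ex3 (pc h1) + ex3 (pc h2) + ex3 (pb h1) * ex3 (fst h2))"
    unfolding eta_def nf_mult ..
  also have "\<dots> = nf ((ex3 (fst h1) + ex3 (fst h2)) mod 3) ((ex3 (pb h1) + ex3 (pb h2)) mod 3)
      ((ex3 (pc h1) + ex3 (pc h2) + ex3 (pb h1) * ex3 (fst h2)) mod 3)"
    by (rule nf_mod)
  also have "\<dots> = eta (hmul h1 h2)"
    unfolding eta_def hmul_def by (simp add: ex3_add ex3_mult mod_add_eq mod_mult_eq)
  finally show ?thesis by simp
qed

lemma eta_one: "eta (0,0,0) = \<one>" unfolding eta_def nf_def by simp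

lemma eta_central: "eta (0,0,c) = w [^] ex3 c" unfolding eta_def nf_def by simp

lemma wpow_ne:
  assumes "c \<noteq> 0" shows "w [^] ex3 c \<noteq> \<one>"
proof -
  have "ex3 c = 1 \<or> ex3 c = 2" using assms by (auto simp: ex3_def)
  then show ?thesis
  proof
    assume "ex3 c = 1" then show ?thesis using w_ne by simp
  next
    assume e: "ex3 c = 2"
    show ?thesis
    proof
      assume "w [^] ex3 c = \<one>"
      then have "w \<otimes> w = \<one>" using e by (simp add: numeral_2_eq_2)
      then have "w \<otimes> w \<otimes> w = w" by simp
      then show False using cube[OF e3 wc] w_ne by simp
    qed
  qed
qed

lemma eta_cancel: "eta a = eta (hmul a b) \<Longrightarrow> eta b = \<one>"
proof -
  assume "eta a = eta (hmul a b)"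
  then have "eta a \<otimes> \<one> = eta a \<otimes> eta b" unfolding eta_hom by simp
  then have "inv (eta a) \<otimes> (eta a \<otimes> \<one>) = inv (eta a) \<otimes> (eta a \<otimes> eta b)" by simp
  then show "eta b = \<one>" by (simp add: m_assoc[symmetric])
qed

lemma eta_ker: "eta h = \<one> \<Longrightarrow> h = (0,0,0)"
proof -
  assume h1: "eta h = \<one>"
  obtain a b c where h: "h = (a, b, c)" by (cases h)
  define e1 :: h where "e1 = (1,0,0)"
  define e2 :: h where "e2 = (0,1,0)"
  have "eta (hmul e1 h) = eta (hmul h e1)" unfolding eta_hom h1 by simp
  moreover have "hmul e1 h = (1 + a, b, c)" "hmul h e1 = hmul (1 + a, b, c) (0, 0, b)"
    unfolding h e1_def by (simp_all add: hmul_def algebra_simps)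
  ultimately have "eta (1 + a, b, c) = eta (hmul (1 + a, b, c) (0, 0, b))" by simp
  then have "eta (0,0,b) = \<one>" by (rule eta_cancel)
  then have b0: "b = 0" using wpow_ne[of b] eta_central by auto
  have "eta (hmul e2 h) = eta (hmul h e2)" unfolding eta_hom h1 by simp
  moreover have "hmul h e2 = (a, 1 + b, c)" "hmul e2 h = hmul (a, 1 + b, c) (0, 0, a)"
    unfolding h e2_def b0 by (simp_all add: hmul_def algebra_simps)
  ultimately have "eta (a, 1 + b, c) = eta (hmul (a, 1 + b, c) (0, 0, a))" by simp
  then have "eta (0,0,a) = \<one>" by (rule eta_cancel)
  then have a0: "a = 0" using wpow_ne[of a] eta_central by auto
  have "eta (0,0,c) = \<one>" using h1 unfolding h a0 b0 .
  then have "c = 0" using wpow_ne[of c] eta_central by auto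
  then show ?thesis using a0 b0 h by simp
qed

lemma eta_inj: "inj eta"
proof (rule injI)
  fix h1 h2 assume e: "eta h1 = eta h2"
  have "eta (hmul h1 (hinv h2)) = eta h2 \<otimes> eta (hinv h2)" unfolding eta_hom e ..
  also have "\<dots> = eta (hmul h2 (hinv h2))" unfolding eta_hom ..
  also have "\<dots> = \<one>" unfolding hmul_hinv eta_one ..
  finally show "h1 = h2" using eta_ker hmul_hinv_zero by blast
qed

end

abbreviation e1 :: h where "e1 \<equiv> (1,0,0)"
abbreviation e2 :: h where "e2 \<equiv> (0,1,0)"
abbreviation e3 :: h where "e3 \<equiv> (0,0,1)"
definition X6 :: "h multiset" where "X6 = {#e1, e1, e2, e2, e3, e3#}"

lemma F3_of_nat_le2: "n \<le> 2 \<Longrightarrow> (of_nat n :: 3) = 0 \<Longrightarrow> n = 0"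
  by (cases n) (auto simp: numeral_2_eq_2 le_Suc_eq)

lemma sa_sb_count:
  "set_mset B \<subseteq> {e1, e2, e3} \<Longrightarrow> sa B = of_nat (count B e1) \<and> sb B = of_nat (count B e2)"
  by (induct B) auto

lemma X6_free:
  assumes "B \<subseteq># X6" "POH B" shows "B = {#}"
proof -
  obtain xs where xs: "mset xs = B" "hprod xs = (0,0,0)" using assms(2) unfolding POH_def by blast
  have s0: "sa B = 0" "sb B = 0" using xs hprod_zero_iff by auto
  have setB: "set_mset B \<subseteq> {e1, e2, e3}" using set_mset_mono[OF assms(1)] by (auto simp: X6_def)
  have c: "count B e1 \<le> 2" "count B e2 \<le> 2" "count B e3 \<le> 2"
    using mset_subset_eq_count[OF assms(1), of e1] mset_subset_eq_count[OF assms(1), of e2]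
      mset_subset_eq_count[OF assms(1), of e3] by (simp_all add: X6_def)
  have "count B e1 = 0" "count B e2 = 0"
    using sa_sb_count[OF setB] s0 c F3_of_nat_le2 by auto
  then have "set_mset B \<subseteq> {e3}" using setB by (auto simp: count_eq_zero_iff)
  then have Br: "B = replicate_mset (size B) e3" by (rule set_mset_subset_singletonD)
  have "size B = count B e3" by (subst (2) Br) simp
  then have szB: "size B \<le> 2" using c by simp
  have all3: "\<forall>z\<in>set xs. z = e3" using xs(1) \<open>set_mset B \<subseteq> {e3}\<close> by auto
  have cen: "\<forall>c\<in>set xs. central c" using all3 by (auto simp: central_def)
  have "sum_list (map pc xs) = of_nat (length xs)" using all3 by (induct xs) auto
  then have "hprod xs = (0, 0, of_nat (size B))"
    using hprod_central[OF cen] xs(1) by (metis size_mset)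
  then have "(of_nat (size B) :: 3) = 0" using xs(2) by simp
  then have "size B = 0" using F3_of_nat_le2 szB by blast
  then show ?thesis by simp
qed

lemma hprod_filter: "hprod (filter (\<lambda>s. s \<noteq> (0,0,0)) xs) = hprod xs"
  by (induct xs) auto

lemma POH_filter: "POH S \<Longrightarrow> POH (filter_mset (\<lambda>s. s \<noteq> (0,0,0)) S)"
  unfolding POH_def by (metis hprod_filter mset_filter)

lemma filter_sub:
  assumes "S \<subseteq># A + replicate_mset k z" "z \<notin># A"
  shows "filter_mset (\<lambda>s. s \<noteq> z) S \<subseteq># A" "size (filter_mset (\<lambda>s. s \<noteq> z) S) + k \<ge> size S"
proof -
  have "filter_mset (\<lambda>s. s \<noteq> z) S \<subseteq># filter_mset (\<lambda>s. s \<noteq> z) (A + replicate_mset k z)"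
    using assms(1) by (rule multiset_filter_mono)
  also have "\<dots> = filter_mset (\<lambda>s. s \<noteq> z) A" by (induct k) auto
  also have "\<dots> \<subseteq># A" by simp
  finally show "filter_mset (\<lambda>s. s \<noteq> z) S \<subseteq># A" .
  have "size S = size (filter_mset (\<lambda>s. s \<noteq> z) S) + size (filter_mset (\<lambda>s. \<not> s \<noteq> z) S)"
    by (metis multiset_partition size_union add.commute)
  moreover have "size (filter_mset (\<lambda>s. \<not> s \<noteq> z) S) \<le> k"
  proof -
    have "size (filter_mset (\<lambda>s. \<not> s \<noteq> z) S) = count S z" by (simp add: filter_eq_replicate_mset)
    also have "\<dots> \<le> count (A + replicate_mset k z) z" using assms(1) by (rule mset_subset_eq_count)
    also have "\<dots> = k" using assms(2) by (simp add: not_in_iff)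
    finally show ?thesis .
  qed
  ultimately show "size (filter_mset (\<lambda>s. s \<noteq> z) S) + k \<ge> size S" by simp
qed

context heis_grp begin

lemma card_h: "card (UNIV :: h set) = 27" by simp

lemma eta_surj:
  assumes "order G = 27" shows "eta ` UNIV = carrier G"
proof -
  have fin: "finite (carrier G)" using assms unfolding order_def by (metis card.infinite zero_neq_numeral)
  have "card (eta ` UNIV) = 27" using card_image[OF eta_inj] card_h by simp
  then show ?thesis using assms unfolding order_def by (intro card_subset_eq[OF fin]) auto
qed

definition etainv :: "'a \<Rightarrow> h" where "etainv = inv_into UNIV eta"

lemma etainv_eta[simp]: "etainv (eta h) = h"
  unfolding etainv_def using eta_inj by (simp add: inv_into_f_f)

lemma eta_etainv:
  assumes "order G = 27" "g \<in> carrier G" shows "eta (etainv g) = g"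
  unfolding etainv_def using assms eta_surj by (metis f_inv_into_f)

lemma foldr_eta: "foldr (\<lambda>a b. a \<otimes> b) (map eta xs) \<one> = eta (hprod xs)"
  by (induct xs) (simp_all add: eta_one eta_hom)

lemma T1:
  assumes "POH S'" "S' \<noteq> {#}" shows "product_one G (image_mset eta S')"
proof -
  obtain xs where xs: "mset xs = S'" "hprod xs = (0,0,0)" using assms(1) unfolding POH_def by blast
  show ?thesis unfolding product_one_def
  proof (intro conjI exI[of _ "map eta xs"])
    show "image_mset eta S' \<noteq> {#}" using assms(2) by simp
    show "mset (map eta xs) = image_mset eta S'" using xs by simp
    show "foldr (\<lambda>a b. a \<otimes> b) (map eta xs) \<one> = \<one>" unfolding foldr_eta xs(2) eta_one ..
  qed
qed

lemma T2:
  assumes ord: "order G = 27" and "set_mset S \<subseteq> carrier G" "product_one G S"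
  shows "POH (image_mset etainv S) \<and> S \<noteq> {#}"
proof -
  obtain xs where xs: "mset xs = S" "foldr (\<lambda>a b. a \<otimes> b) xs \<one> = \<one>" "S \<noteq> {#}"
    using assms(3) unfolding product_one_def by blast
  have xsc: "set xs \<subseteq> carrier G" using xs(1) assms(2) by auto
  define ys where "ys = map etainv xs"
  have "map eta ys = xs" unfolding ys_def using xsc eta_etainv[OF ord] by (induct xs) auto
  then have "eta (hprod ys) = \<one>" using xs(2) foldr_eta[of ys] by simp
  then have "eta (hprod ys) = eta (0,0,0)" using eta_one by simp
  then have "hprod ys = (0,0,0)" using eta_inj by (simp add: inj_eq)
  moreover have "mset ys = image_mset etainv S" unfolding ys_def using xs(1) by auto
  ultimately show ?thesis unfolding POH_def using xs(3) by blast
qed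

lemma im_im:
  assumes "order G = 27" "set_mset M \<subseteq> carrier G"
  shows "image_mset eta (image_mset etainv M) = M"
proof -
  have "image_mset eta (image_mset etainv M) = image_mset (\<lambda>g. eta (etainv g)) M"
    by (simp add: image_mset.compositionality comp_def)
  also have "\<dots> = image_mset id M" using assms eta_etainv by (intro image_mset_cong) auto
  finally show ?thesis by simp
qed

lemma main_G:
  assumes ord: "order G = 27" and "seq_over G M" "size M = 33"
  shows "\<exists>S. S \<subseteq># M \<and> size S = 27 \<and> product_one G S"
proof -
  have Mc: "set_mset M \<subseteq> carrier G" using assms(2) unfolding seq_over_def .
  obtain S' where S': "S' \<subseteq># image_mset etainv M" "size S' = 27" "POH S'"
    using main_H[of "image_mset etainv M"] assms(3) by auto
  have "image_mset eta S' \<subseteq># image_mset eta (image_mset etainv M)" by (rule image_mset_subseteq_mono[OF S'(1)])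
  then have "image_mset eta S' \<subseteq># M" using im_im[OF ord Mc] by simp
  moreover have "S' \<noteq> {#}" using S'(2) by auto
  then have "product_one G (image_mset eta S')" using T1[OF S'(3)] by simp
  moreover have "size (image_mset eta S') = 27" using S'(2) by simp
  ultimately show ?thesis by blast
qed

lemma eta_X6_free:
  assumes ord: "order G = 27" and "S \<subseteq># image_mset eta (replicate_mset k (0,0,0) + X6)" "product_one G S" "size S > k"
  shows False
proof -
  have "set_mset (image_mset eta (replicate_mset k (0,0,0) + X6)) \<subseteq> carrier G" by auto
  then have "set_mset S \<subseteq> carrier G" using set_mset_mono[OF assms(2)] by blast
  from T2[OF ord this assms(3)] have P: "POH (image_mset etainv S)" by blast
  have "image_mset etainv S \<subseteq># image_mset etainv (image_mset eta (replicate_mset k (0,0,0) + X6))"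
    by (rule image_mset_subseteq_mono[OF assms(2)])
  also have "\<dots> = replicate_mset k (0,0,0) + X6" by (simp add: image_mset.compositionality comp_def)
  finally have sub: "image_mset etainv S \<subseteq># X6 + replicate_mset k (0,0,0)" by (simp add: add.commute)
  have z: "(0,0,0) \<notin># X6" by (simp add: X6_def)
  define B where "B = filter_mset (\<lambda>s. s \<noteq> (0,0,0)) (image_mset etainv S)"
  have "B \<subseteq># X6" "size B + k \<ge> size S" using filter_sub[OF sub z] unfolding B_def by simp_all
  moreover have "POH B" unfolding B_def by (rule POH_filter[OF P])
  ultimately have "B = {#}" using X6_free by blast
  then show False using \<open>size B + k \<ge> size S\<close> assms(4) by simp
qed

lemma dav_bound:
  assumes ord: "order G = 27" and "seq_over G M" "\<not> (\<exists>S. S \<subseteq># M \<and> product_one G S)"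
  shows "size M \<le> 6"
proof (rule ccontr)
  assume "\<not> size M \<le> 6"
  then obtain M7 where M7: "M7 \<subseteq># M" "size M7 = 7" using exists_sub_size[of 7 M] by auto
  have Mc: "set_mset M7 \<subseteq> carrier G" using assms(2) set_mset_mono[OF M7(1)] unfolding seq_over_def by blast
  have n1: "\<one> \<notin># M7"
  proof
    assume "\<one> \<in># M7"
    then have "{#\<one>#} \<subseteq># M" using M7(1) by (meson mset_subset_eq_single subset_mset.order_trans)
    moreover have "product_one G {#\<one>#}" unfolding product_one_def by (intro conjI exI[of _ "[\<one>]"]) auto
    ultimately show False using assms(3) by blast
  qed
  define A where "A = image_mset etainv M7"
  have zA: "(0,0,0) \<notin># A"
  proof
    assume "(0,0,0) \<in># A"
    then obtain g where g: "g \<in># M7" "etainv g = (0,0,0)" unfolding A_def by auto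
    then have "g = \<one>" using eta_etainv[OF ord] Mc eta_one by (metis subsetD)
    then show False using n1 g by simp
  qed
  obtain S' where S': "S' \<subseteq># A + replicate_mset 26 (0,0,0)" "size S' = 27" "POH S'"
    using main_H[of "A + replicate_mset 26 (0,0,0)"] M7(2) unfolding A_def by auto
  define B where "B = filter_mset (\<lambda>s. s \<noteq> (0,0,0)) S'"
  have B: "B \<subseteq># A" "size B + 26 \<ge> 27" using filter_sub[OF S'(1) zA] S'(2) unfolding B_def by simp_all
  have PB: "POH B" unfolding B_def by (rule POH_filter[OF S'(3)])
  have "B \<noteq> {#}" using B(2) by auto
  then have "product_one G (image_mset eta B)" using T1[OF PB] by simp
  moreover have "image_mset eta B \<subseteq># M"
  proof -
    have "image_mset eta B \<subseteq># image_mset eta A" by (rule image_mset_subseteq_mono[OF B(1)])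
    also have "image_mset eta A = M7" unfolding A_def by (rule im_im[OF ord Mc])
    finally show ?thesis using M7(1) by (rule subset_mset.order_trans)
  qed
  ultimately show False using assms(3) by blast
qed

end

theorem theorem3p5:
  fixes G :: "('a, 'b) monoid_scheme"
  assumes "group G"
    and "order G = 27"
    and "\<forall>x\<in>carrier G. x [^]\<^bsub>G\<^esub> (3::nat) = \<one>\<^bsub>G\<^esub>"
    and "\<exists>x\<in>carrier G. \<exists>y\<in>carrier G. x \<otimes>\<^bsub>G\<^esub> y \<noteq> y \<otimes>\<^bsub>G\<^esub> x"
  shows "(\<forall>M. seq_over G M \<and> size M = 33 \<longrightarrow>
            (\<exists>S. S \<subseteq># M \<and> size S = 27 \<and> product_one G S))
         \<and> gao_constant G = 33
         \<and> gao_constant G = small_davenport G + order G"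
proof -
  obtain x y where xy: "x \<in> carrier G" "y \<in> carrier G" "x \<otimes>\<^bsub>G\<^esub> y \<noteq> y \<otimes>\<^bsub>G\<^esub> x"
    using assms(4) by blast
  interpret H: heis_grp G x y
    by (rule heis_grp.intro[OF assms(1)], unfold_locales) (use assms(3) xy in auto)
  have ord: "order G = 27" by (rule assms(2))
  have C1: "\<forall>M. seq_over G M \<and> size M = 33 \<longrightarrow> (\<exists>S. S \<subseteq># M \<and> size S = 27 \<and> product_one G S)"
    using H.main_G[OF ord] by blast
  define P where "P N \<longleftrightarrow> (\<forall>M. seq_over G M \<and> size M \<ge> N \<longrightarrow>
       (\<exists>S. S \<subseteq># M \<and> size S = order G \<and> product_one G S))" for N
  have P33: "P 33"
    unfolding P_def
  proof (intro allI impI)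
    fix M assume M: "seq_over G M \<and> 33 \<le> size M"
    then obtain M' where M': "M' \<subseteq># M" "size M' = 33" using exists_sub_size[of 33 M] by blast
    have "seq_over G M'" using M M'(1) set_mset_mono unfolding seq_over_def by blast
    then obtain S where "S \<subseteq># M'" "size S = 27" "product_one G S" using C1 M'(2) by blast
    then show "\<exists>S. S \<subseteq># M \<and> size S = order G \<and> product_one G S"
      using M'(1) ord by (metis subset_mset.order_trans)
  qed
  define M0 where "M0 = image_mset H.eta (replicate_mset 26 (0,0,0) + X6)"
  have M0s: "seq_over G M0" unfolding M0_def seq_over_def by auto
  have M0z: "size M0 = 32" unfolding M0_def by (simp add: X6_def)
  have notP: "\<not> P N" if "N \<le> 32" for N
  proof
    assume PN: "P N"
    have "N \<le> size M0" using that M0z by simp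
    then have "\<exists>S. S \<subseteq># M0 \<and> size S = order G \<and> product_one G S"
      using PN M0s unfolding P_def by blast
    then obtain S where S: "S \<subseteq># M0" "size S = order G" "product_one G S" by blast
    show False by (rule H.eta_X6_free[OF ord, of S 26]) (use S ord in \<open>auto simp: M0_def\<close>)
  qed
  have gao: "gao_constant G = 33"
    unfolding gao_constant_def P_def[symmetric]
  proof (rule Least_equality)
    show "P 33" by (rule P33)
    fix N assume "P N"
    show "33 \<le> N"
    proof (rule ccontr)
      assume "\<not> 33 \<le> N"
      then have "N \<le> 32" by simp
      then show False using notP \<open>P N\<close> by blast
    qed
  qed
  define D where "D = {size M | M. seq_over G M \<and> \<not> (\<exists>S. S \<subseteq># M \<and> product_one G S)}"
  have Dle: "n \<le> 6" if "n \<in> D" for n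
    using that H.dav_bound[OF ord] unfolding D_def by blast
  have D6: "6 \<in> D"
  proof -
    define M6 where "M6 = image_mset H.eta X6"
    have "seq_over G M6" unfolding M6_def seq_over_def by auto
    moreover have "\<not> (\<exists>S. S \<subseteq># M6 \<and> product_one G S)"
    proof
      assume "\<exists>S. S \<subseteq># M6 \<and> product_one G S"
      then obtain S where S: "S \<subseteq># M6" "product_one G S" by blast
      have "S \<noteq> {#}" using S(2) unfolding product_one_def by blast
      then have "size S > 0" by (simp add: nonempty_has_size)
      then show False using H.eta_X6_free[OF ord, of S 0] S unfolding M6_def by simp
    qed
    moreover have "size M6 = 6" unfolding M6_def by (simp add: X6_def)
    ultimately have "6 = size M6 \<and> seq_over G M6 \<and> \<not> (\<exists>S. S \<subseteq># M6 \<and> product_one G S)" by simp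
    then show ?thesis unfolding D_def mem_Collect_eq by (intro exI[of _ M6])
  qed
  have finD: "finite D" using Dle by (meson finite_atMost finite_subset atMost_iff subsetI)
  have dav: "small_davenport G = 6"
    unfolding small_davenport_def D_def[symmetric]
    by (rule Max_eqI[OF finD Dle D6])
  show ?thesis using C1 gao dav ord by simp
qed

end
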